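(* Let $$(W)\qquad w_{,t}=(w+1)\Bigl(w_2\Bigl(\frac{1}{w_1}+1\Bigr)w-w\Bigl(\frac{1}{w_{-1}}+1\Bigr)w_{-2}+w_1-w_{-1}\Bigr).$$ In each of the following cases, if $u(n,t)$ is a solution of the given lattice equation, then $w(n,t)$ defined by the given formula is a solution of $(W)$: (a) $\tfrac12u_{,t}=\frac{1}{\frac{2}{u_2-u}+\frac{1}{u-u_1}+\frac{1}{u-u_{-1}}}-\frac{1}{\frac{2}{u_{-2}-u}+\frac{1}{u-u_1}+\frac{1}{u-u_{-1}}}$, with $w=\frac{1}{2\frac{(u_3-u_2)(u_1-u)}{(u_3-u_1)(u_2-u)}-1}$; (c) $\tfrac14u_{,t}=\frac{1}{\frac{(u_2-u+2)(u_1-u-1)(u_{-1}-u-1)}{(u_2-u-2)(u_1-u+1)(u_{-1}-u+1)}-1}+\frac{1}{\frac{(u_{-2}-u-2)(u_1-u+1)(u_{-1}-u+1)}{(u_{-2}-u+2)(u_1-u-1)(u_{-1}-u-1)}-1}$, with $w=\frac{(u_3-2u_2+u_1)(u_2-2u_1+u)}{2-2(u_2-u_1)^2-(u_3-2u_2+u_1)(u_2-2u_1+u)}$; (d) $u_{,t}=\frac{u-u_{-1}}{u_1-u_{-1}+\frac{u-u_1}{u-u_2}}-\frac{u-u_1}{u_1-u_{-1}+\frac{u-u_{-1}}{u-u_{-2}}}$, with $w=-\frac{1}{1+\frac{u_2-u_1}{(u_3-u_1)(u_2-u)}}$; (f) $u_{,t}=u\frac{(1-\frac{u}{u_2})(1-\frac{u_{-1}}{u})}{1-\frac{u}{u_1}}+u\frac{(1-\frac{u_{-2}}{u})(1-\frac{u}{u_1})}{1-\frac{u_{-1}}{u}}$,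 with $w=\frac{u}{u_1}-1$; (h) $u_{,t}=u\frac{(1-\frac{u}{u_2})(1+\frac{u_{-1}}{u})}{1+\frac{u}{u_1}}+u\frac{(1-\frac{u_{-2}}{u})(1+\frac{u}{u_1})}{1+\frac{u_{-1}}{u}}$, with $w=-\frac{u}{u_1}-1$; (i) for a constant $\gamma\neq0$ with $\gamma^2\neq-1$: $-\frac{1}{1+\gamma^2}u_{,t}=\frac{(u-\gamma u_{-1})(u-\gamma u_1)(u-\gamma^{-2}u_2)}{(\gamma u_{-1}-u)(\gamma u_1-u_2)-(\gamma u-u_1)(u_{-1}-\gamma u_2)}-\frac{(u-\gamma^{-1}u_{-1})(u-\gamma^{-1}u_1)(u-\gamma^2u_{-2})}{(\gamma u_{-2}-u_{-1})(\gamma u-u_1)-(\gamma u_{-1}-u)(u_{-2}-\gamma u_1)}$, with $w=\frac{\gamma(u-(\gamma^{-1}+\gamma)u_1+u_2)(u_1-(\gamma^{-1}+\gamma)u_2+u_3)}{(\gamma u-u_1)(\gamma u_2-u_3)-(\gamma u_1-u_2)(u-\gamma u_3)}$.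
   Context: Here $u=u(n,t)$, $u_m=u(n+m,t)$, $w=w(n,t)$, $w_m=w(n+m,t)$ for $n\in\mathbb Z$, and ${,t}$ denotes $\partial/\partial t$. *)

theory Defs
  imports "HOL-Analysis.Analysis"
begin

text \<open>Fields u :: int => real => complex, u n t = u(n,t).  A "local value" v :: int => complex
  stands for the shifted values, v m = u_m = u(n+m,t).\<close>

type_synonym field = "int \<Rightarrow> real \<Rightarrow> complex"

definition shifts :: "field \<Rightarrow> int \<Rightarrow> real \<Rightarrow> int \<Rightarrow> complex" where
  "shifts u n t = (\<lambda>m. u (n + m) t)"

definition lattice_solution ::
  "((int \<Rightarrow> complex) \<Rightarrow> complex) \<Rightarrow> ((int \<Rightarrow> complex) \<Rightarrow> bool) \<Rightarrow> field \<Rightarrow> bool" where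
  "lattice_solution F nd u \<longleftrightarrow>
     (\<forall>n t. nd (shifts u n t)) \<and>
     (\<forall>n t. ((\<lambda>s. u n s) has_vector_derivative F (shifts u n t)) (at t))"

definition W_rhs :: "(int \<Rightarrow> complex) \<Rightarrow> complex" where
  "W_rhs v = (v 0 + 1) * (v 2 * (1 / v 1 + 1) * v 0 - v 0 * (1 / v (-1) + 1) * v (-2)
                          + v 1 - v (-1))"

definition W_solution :: "field \<Rightarrow> bool" where
  "W_solution w \<longleftrightarrow>
     (\<forall>n t. ((\<lambda>s. w n s) has_vector_derivative W_rhs (shifts w n t)) (at t))"

definition transform :: "((int \<Rightarrow> complex) \<Rightarrow> complex) \<Rightarrow> field \<Rightarrow> field" where
  "transform G u = (\<lambda>n t. G (shifts u n t))"

definition maps_to_W ::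
  "((int \<Rightarrow> complex) \<Rightarrow> complex) \<Rightarrow> ((int \<Rightarrow> complex) \<Rightarrow> bool) \<Rightarrow>
   ((int \<Rightarrow> complex) \<Rightarrow> complex) \<Rightarrow> ((int \<Rightarrow> complex) \<Rightarrow> bool) \<Rightarrow> bool" where
  "maps_to_W F ndF G ndG \<longleftrightarrow>
     (\<forall>u. lattice_solution F ndF u \<and> (\<forall>n t. ndG (shifts u n t))
          \<and> (\<forall>n t. transform G u n t \<noteq> 0)
        \<longrightarrow> W_solution (transform G u))"

definition F_a :: "(int \<Rightarrow> complex) \<Rightarrow> complex" where
  "F_a v = 2 * (1 / (2 / (v 2 - v 0) + 1 / (v 0 - v 1) + 1 / (v 0 - v (-1)))
              - 1 / (2 / (v (-2) - v 0) + 1 / (v 0 - v 1) + 1 / (v 0 - v (-1))))"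
definition ndF_a :: "(int \<Rightarrow> complex) \<Rightarrow> bool" where
  "ndF_a v \<longleftrightarrow> v 2 - v 0 \<noteq> 0 \<and> v 0 - v 1 \<noteq> 0 \<and> v 0 - v (-1) \<noteq> 0 \<and> v (-2) - v 0 \<noteq> 0 \<and>
     2 / (v 2 - v 0) + 1 / (v 0 - v 1) + 1 / (v 0 - v (-1)) \<noteq> 0 \<and>
     2 / (v (-2) - v 0) + 1 / (v 0 - v 1) + 1 / (v 0 - v (-1)) \<noteq> 0"
definition G_a :: "(int \<Rightarrow> complex) \<Rightarrow> complex" where
  "G_a v = 1 / (2 * ((v 3 - v 2) * (v 1 - v 0)) / ((v 3 - v 1) * (v 2 - v 0)) - 1)"
definition ndG_a :: "(int \<Rightarrow> complex) \<Rightarrow> bool" where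
  "ndG_a v \<longleftrightarrow> (v 3 - v 1) * (v 2 - v 0) \<noteq> 0 \<and>
     2 * ((v 3 - v 2) * (v 1 - v 0)) / ((v 3 - v 1) * (v 2 - v 0)) - 1 \<noteq> 0"

definition F_c :: "(int \<Rightarrow> complex) \<Rightarrow> complex" where
  "F_c v = 4 * (1 / (((v 2 - v 0 + 2) * (v 1 - v 0 - 1) * (v (-1) - v 0 - 1)) /
                     ((v 2 - v 0 - 2) * (v 1 - v 0 + 1) * (v (-1) - v 0 + 1)) - 1)
              + 1 / (((v (-2) - v 0 - 2) * (v 1 - v 0 + 1) * (v (-1) - v 0 + 1)) /
                     ((v (-2) - v 0 + 2) * (v 1 - v 0 - 1) * (v (-1) - v 0 - 1)) - 1))"
definition ndF_c :: "(int \<Rightarrow> complex) \<Rightarrow> bool" where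
  "ndF_c v \<longleftrightarrow> (v 2 - v 0 - 2) * (v 1 - v 0 + 1) * (v (-1) - v 0 + 1) \<noteq> 0 \<and>
     (v (-2) - v 0 + 2) * (v 1 - v 0 - 1) * (v (-1) - v 0 - 1) \<noteq> 0 \<and>
     ((v 2 - v 0 + 2) * (v 1 - v 0 - 1) * (v (-1) - v 0 - 1)) /
       ((v 2 - v 0 - 2) * (v 1 - v 0 + 1) * (v (-1) - v 0 + 1)) - 1 \<noteq> 0 \<and>
     ((v (-2) - v 0 - 2) * (v 1 - v 0 + 1) * (v (-1) - v 0 + 1)) /
       ((v (-2) - v 0 + 2) * (v 1 - v 0 - 1) * (v (-1) - v 0 - 1)) - 1 \<noteq> 0"
definition G_c :: "(int \<Rightarrow> complex) \<Rightarrow> complex" where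
  "G_c v = ((v 3 - 2 * v 2 + v 1) * (v 2 - 2 * v 1 + v 0)) /
           (2 - 2 * (v 2 - v 1)^2 - (v 3 - 2 * v 2 + v 1) * (v 2 - 2 * v 1 + v 0))"
definition ndG_c :: "(int \<Rightarrow> complex) \<Rightarrow> bool" where
  "ndG_c v \<longleftrightarrow> 2 - 2 * (v 2 - v 1)^2 - (v 3 - 2 * v 2 + v 1) * (v 2 - 2 * v 1 + v 0) \<noteq> 0"

definition F_d :: "(int \<Rightarrow> complex) \<Rightarrow> complex" where
  "F_d v = (v 0 - v (-1)) / (v 1 - v (-1) + (v 0 - v 1) / (v 0 - v 2))
         - (v 0 - v 1) / (v 1 - v (-1) + (v 0 - v (-1)) / (v 0 - v (-2)))"
definition ndF_d :: "(int \<Rightarrow> complex) \<Rightarrow> bool" where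
  "ndF_d v \<longleftrightarrow> v 0 - v 2 \<noteq> 0 \<and> v 0 - v (-2) \<noteq> 0 \<and>
     v 1 - v (-1) + (v 0 - v 1) / (v 0 - v 2) \<noteq> 0 \<and>
     v 1 - v (-1) + (v 0 - v (-1)) / (v 0 - v (-2)) \<noteq> 0"
definition G_d :: "(int \<Rightarrow> complex) \<Rightarrow> complex" where
  "G_d v = - (1 / (1 + (v 2 - v 1) / ((v 3 - v 1) * (v 2 - v 0))))"
definition ndG_d :: "(int \<Rightarrow> complex) \<Rightarrow> bool" where
  "ndG_d v \<longleftrightarrow> (v 3 - v 1) * (v 2 - v 0) \<noteq> 0 \<and>
     1 + (v 2 - v 1) / ((v 3 - v 1) * (v 2 - v 0)) \<noteq> 0"

definition F_f :: "(int \<Rightarrow> complex) \<Rightarrow> complex" where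
  "F_f v = v 0 * ((1 - v 0 / v 2) * (1 - v (-1) / v 0)) / (1 - v 0 / v 1)
         + v 0 * ((1 - v (-2) / v 0) * (1 - v 0 / v 1)) / (1 - v (-1) / v 0)"
definition ndF_f :: "(int \<Rightarrow> complex) \<Rightarrow> bool" where
  "ndF_f v \<longleftrightarrow> v 0 \<noteq> 0 \<and> v 1 \<noteq> 0 \<and> v 2 \<noteq> 0 \<and>
     1 - v 0 / v 1 \<noteq> 0 \<and> 1 - v (-1) / v 0 \<noteq> 0"
definition G_f :: "(int \<Rightarrow> complex) \<Rightarrow> complex" where
  "G_f v = v 0 / v 1 - 1"
definition ndG_f :: "(int \<Rightarrow> complex) \<Rightarrow> bool" where
  "ndG_f v \<longleftrightarrow> v 1 \<noteq> 0"

definition F_h :: "(int \<Rightarrow> complex) \<Rightarrow> complex" where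
  "F_h v = v 0 * ((1 - v 0 / v 2) * (1 + v (-1) / v 0)) / (1 + v 0 / v 1)
         + v 0 * ((1 - v (-2) / v 0) * (1 + v 0 / v 1)) / (1 + v (-1) / v 0)"
definition ndF_h :: "(int \<Rightarrow> complex) \<Rightarrow> bool" where
  "ndF_h v \<longleftrightarrow> v 0 \<noteq> 0 \<and> v 1 \<noteq> 0 \<and> v 2 \<noteq> 0 \<and>
     1 + v 0 / v 1 \<noteq> 0 \<and> 1 + v (-1) / v 0 \<noteq> 0"
definition G_h :: "(int \<Rightarrow> complex) \<Rightarrow> complex" where
  "G_h v = - (v 0 / v 1) - 1"
definition ndG_h :: "(int \<Rightarrow> complex) \<Rightarrow> bool" where
  "ndG_h v \<longleftrightarrow> v 1 \<noteq> 0"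

definition D1_i :: "complex \<Rightarrow> (int \<Rightarrow> complex) \<Rightarrow> complex" where
  "D1_i g v = (g * v (-1) - v 0) * (g * v 1 - v 2) - (g * v 0 - v 1) * (v (-1) - g * v 2)"
definition D2_i :: "complex \<Rightarrow> (int \<Rightarrow> complex) \<Rightarrow> complex" where
  "D2_i g v = (g * v (-2) - v (-1)) * (g * v 0 - v 1) - (g * v (-1) - v 0) * (v (-2) - g * v 1)"

text \<open>The equation -(1/(1+g^2)) u_t = RHS is solved for u_t (valid since g^2 \<noteq> -1).\<close>
definition F_i :: "complex \<Rightarrow> (int \<Rightarrow> complex) \<Rightarrow> complex" where
  "F_i g v = - (1 + g^2) *
     ((v 0 - g * v (-1)) * (v 0 - g * v 1) * (v 0 - inverse (g^2) * v 2) / D1_i g v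
    - (v 0 - inverse g * v (-1)) * (v 0 - inverse g * v 1) * (v 0 - g^2 * v (-2)) / D2_i g v)"
definition ndF_i :: "complex \<Rightarrow> (int \<Rightarrow> complex) \<Rightarrow> bool" where
  "ndF_i g v \<longleftrightarrow> D1_i g v \<noteq> 0 \<and> D2_i g v \<noteq> 0"
definition G_i :: "complex \<Rightarrow> (int \<Rightarrow> complex) \<Rightarrow> complex" where
  "G_i g v = g * (v 0 - (inverse g + g) * v 1 + v 2) * (v 1 - (inverse g + g) * v 2 + v 3) /
     ((g * v 0 - v 1) * (g * v 2 - v 3) - (g * v 1 - v 2) * (v 0 - g * v 3))"
definition ndG_i :: "complex \<Rightarrow> (int \<Rightarrow> complex) \<Rightarrow> bool" where
  "ndG_i g v \<longleftrightarrow> (g * v 0 - v 1) * (g * v 2 - v 3) - (g * v 1 - v 2) * (v 0 - g * v 3) \<noteq> 0"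

end

theory Submission
  imports Defs
begin


definition sh :: "int \<Rightarrow> (int \<Rightarrow> complex) \<Rightarrow> int \<Rightarrow> complex" where
  "sh j x = (\<lambda>m. x (j + m))"

lemma sh_apply: "sh j x m = x (j + m)" by (simp add: sh_def)
lemma sh_0[simp]: "sh 0 x = x" by (simp add: sh_def)
lemma sh_sh: "sh i (sh j x) = sh (j + i) x" by (simp add: sh_def add.assoc)
lemma shifts_add: "shifts u (n + j) t = sh j (shifts u n t)"
  by (simp add: shifts_def sh_def add.assoc)

lemma idx_simps:
  "(- 3) + (- 3) = ((- 6)::int)"
  "(- 3) + (- 2) = ((- 5)::int)"
  "(- 3) + (- 1) = ((- 4)::int)"
  "(- 3) + (1) = ((- 2)::int)"
  "(- 3) + (2) = ((- 1)::int)"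
  "(- 3) + (3) = ((0)::int)"
  "(- 3) + (4) = ((1)::int)"
  "(- 2) + (- 3) = ((- 5)::int)"
  "(- 2) + (- 2) = ((- 4)::int)"
  "(- 2) + (- 1) = ((- 3)::int)"
  "(- 2) + (1) = ((- 1)::int)"
  "(- 2) + (2) = ((0)::int)"
  "(- 2) + (3) = ((1)::int)"
  "(- 2) + (4) = ((2)::int)"
  "(- 1) + (- 3) = ((- 4)::int)"
  "(- 1) + (- 2) = ((- 3)::int)"
  "(- 1) + (- 1) = ((- 2)::int)"
  "(- 1) + (1) = ((0)::int)"
  "(- 1) + (2) = ((1)::int)"
  "(- 1) + (3) = ((2)::int)"
  "(- 1) + (4) = ((3)::int)"
  "(1) + (- 3) = ((- 2)::int)"
  "(1) + (- 2) = ((- 1)::int)"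
  "(1) + (- 1) = ((0)::int)"
  "(1) + (1) = ((2)::int)"
  "(1) + (2) = ((3)::int)"
  "(1) + (3) = ((4)::int)"
  "(1) + (4) = ((5)::int)"
  "(2) + (- 3) = ((- 1)::int)"
  "(2) + (- 2) = ((0)::int)"
  "(2) + (- 1) = ((1)::int)"
  "(2) + (1) = ((3)::int)"
  "(2) + (2) = ((4)::int)"
  "(2) + (3) = ((5)::int)"
  "(2) + (4) = ((6)::int)"
  "(3) + (- 3) = ((0)::int)"
  "(3) + (- 2) = ((1)::int)"
  "(3) + (- 1) = ((2)::int)"
  "(3) + (1) = ((4)::int)"
  "(3) + (2) = ((5)::int)"
  "(3) + (3) = ((6)::int)"
  "(3) + (4) = ((7)::int)"
  "(4) + (- 3) = ((1)::int)"
  "(4) + (- 2) = ((2)::int)"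
  "(4) + (- 1) = ((3)::int)"
  "(4) + (1) = ((5)::int)"
  "(4) + (2) = ((6)::int)"
  "(4) + (3) = ((7)::int)"
  "(4) + (4) = ((8)::int)"
  by simp_all

lemma vd_eq: "(f has_vector_derivative D') F \<Longrightarrow> D' = D \<Longrightarrow> (f has_vector_derivative D) F"
  by simp

lemma quot_vd:
  fixes f g :: "real \<Rightarrow> complex"
  assumes "(f has_vector_derivative f') (at t)" "(g has_vector_derivative g') (at t)" "g t \<noteq> 0"
  shows "((\<lambda>s. f s / g s) has_vector_derivative ((f' * g t - f t * g') / (g t)^2)) (at t)"
proof -
  have "((\<lambda>s. f s / g s) has_derivative (\<lambda>h. ((h *\<^sub>R f') * g t - f t * (h *\<^sub>R g')) / (g t * g t))) (at t)"
    using has_derivative_divide'[OF assms(1)[unfolded has_vector_derivative_def]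
        assms(2)[unfolded has_vector_derivative_def] assms(3)] .
  then show ?thesis unfolding has_vector_derivative_def
    by (rule has_derivative_eq_rhs) (auto simp: fun_eq_iff scaleR_conv_of_real power2_eq_square field_simps)
qed

lemma quot_lin:
  fixes M N a0 a1 a2 a3 b0 b1 b2 b3 y0 y1 y2 y3 :: complex
  assumes "M \<noteq> 0"
  shows "((a0*y0 + a1*y1 + a2*y2 + a3*y3) * M - N * (b0*y0 + b1*y1 + b2*y2 + b3*y3)) / M^2
    = (a0*M - N*b0)/M^2*y0 + (a1*M - N*b1)/M^2*y1 + (a2*M - N*b2)/M^2*y2 + (a3*M - N*b3)/M^2*y3"
  using assms by (simp add: field_simps)

lemma combine:
 fixes Nm2 Nm1 N0 N1 N2 Mm2 Mm1 M0 M1 M2 K0 K1 K2 K3 a0 a1 a2 a3 b0 b1 b2 b3 Y1 Y2 Y3 Y4 Y5 :: complex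
 assumes nz: "Mm2 \<noteq> 0" "Mm1 \<noteq> 0" "M0 \<noteq> 0" "M1 \<noteq> 0" "M2 \<noteq> 0" "Nm2 \<noteq> 0" "Nm1 \<noteq> 0" "N0 \<noteq> 0" "N1 \<noteq> 0" "N2 \<noteq> 0"
  and p1: "K3*a3*N1 - N0*(M0+N0)*N2*(M1+N1) = Y1*M2*N1"
  and p2: "K0*b0*Nm1 - N0*(M0+N0)*Nm2*(Mm1+Nm1) = Y2*Mm2*Nm1"
  and p3: "K2*a2 - K3*b3 - (M0+N0)*M0*N1 = Y3*M1"
  and p4: "K0*a0 - K1*b1 + (M0+N0)*M0*Nm1 = Y4*Mm1"
  and p5: "K1*a1 - K2*b2 = Y5*M0"
  and fin: "Y1 - Y2 + Y3 + Y4 + Y5 = 0"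
 shows "K0/M0^2*(a0/Mm1 - b0/Mm2) + K1/M0^2*(a1/M0 - b1/Mm1) + K2/M0^2*(a2/M1 - b2/M0) + K3/M0^2*(a3/M2 - b3/M1)
   = (N0/M0 + 1) * (N2/M2 * (1 / (N1/M1) + 1) * (N0/M0) - N0/M0 * (1 / (Nm1/Mm1) + 1) * (Nm2/Mm2) + N1/M1 - Nm1/Mm1)"
proof -
  have e1: "K3*a3/M2 = N0*(M0+N0)*N2*(M1+N1)/(M2*N1) + Y1"
    using p1 nz by (simp add: field_simps)
  have e2: "K0*b0/Mm2 = N0*(M0+N0)*Nm2*(Mm1+Nm1)/(Mm2*Nm1) + Y2"
    using p2 nz by (simp add: field_simps)
  have e3: "(K2*a2 - K3*b3)/M1 = (M0+N0)*M0*N1/M1 + Y3"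
    using p3 nz by (simp add: field_simps)
  have e4: "(K0*a0 - K1*b1)/Mm1 = -((M0+N0)*M0*Nm1/Mm1) + Y4"
    using p4 nz by (simp add: field_simps)
  have e5: "(K1*a1 - K2*b2)/M0 = Y5"
    using p5 nz by (simp add: field_simps)
  have "K0/M0^2*(a0/Mm1 - b0/Mm2) + K1/M0^2*(a1/M0 - b1/Mm1) + K2/M0^2*(a2/M1 - b2/M0) + K3/M0^2*(a3/M2 - b3/M1)
     = (K3*a3/M2 - K0*b0/Mm2 + (K2*a2 - K3*b3)/M1 + (K0*a0 - K1*b1)/Mm1 + (K1*a1 - K2*b2)/M0) / M0^2"
    using nz by (simp add: field_simps)
  also have "\<dots> = (N0*(M0+N0)*N2*(M1+N1)/(M2*N1) - N0*(M0+N0)*Nm2*(Mm1+Nm1)/(Mm2*Nm1)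
        + (M0+N0)*M0*N1/M1 - (M0+N0)*M0*Nm1/Mm1 + (Y1 - Y2 + Y3 + Y4 + Y5)) / M0^2"
    unfolding e1 e2 e3 e4 e5 by (simp add: algebra_simps)
  also have "\<dots> = (N0/M0 + 1) * (N2/M2 * (1 / (N1/M1) + 1) * (N0/M0) - N0/M0 * (1 / (Nm1/Mm1) + 1) * (Nm2/Mm2) + N1/M1 - Nm1/Mm1)"
    unfolding fin using nz apply (simp add: field_simps) by algebra
  finally show ?thesis .
qed

lemma framework:
  fixes F G N M a b K0 K1 K2 K3 :: "(int \<Rightarrow> complex) \<Rightarrow> complex"
    and ndF ndG :: "(int \<Rightarrow> complex) \<Rightarrow> bool"
  assumes G_eq: "\<And>v. ndG v \<Longrightarrow> M v \<noteq> 0 \<and> G v = N v / M v"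
    and F_eq: "\<And>v. ndF v \<Longrightarrow> M (sh (-1) v) \<noteq> 0 \<Longrightarrow> M (sh (-2) v) \<noteq> 0 \<Longrightarrow>
        F v = a v / M (sh (-1) v) - b v / M (sh (-2) v)"
    and chain: "\<And>u n t y0 y1 y2 y3. ((\<lambda>s. u n s) has_vector_derivative y0) (at t) \<Longrightarrow>
        ((\<lambda>s. u (n+1) s) has_vector_derivative y1) (at t) \<Longrightarrow>
        ((\<lambda>s. u (n+2) s) has_vector_derivative y2) (at t) \<Longrightarrow>
        ((\<lambda>s. u (n+3) s) has_vector_derivative y3) (at t) \<Longrightarrow> M (shifts u n t) \<noteq> 0 \<Longrightarrow>
        ((\<lambda>s. N (shifts u n s) / M (shifts u n s)) has_vector_derivative
          (K0 (shifts u n t) / (M (shifts u n t))^2 * y0 + K1 (shifts u n t) / (M (shifts u n t))^2 * y1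
         + K2 (shifts u n t) / (M (shifts u n t))^2 * y2 + K3 (shifts u n t) / (M (shifts u n t))^2 * y3)) (at t)"
    and alg: "\<And>x. (\<forall>j. M (sh j x) \<noteq> 0) \<Longrightarrow> (\<forall>j. N (sh j x) \<noteq> 0) \<Longrightarrow>
        K0 x / (M x)^2 * (a x / M (sh (-1) x) - b x / M (sh (-2) x))
      + K1 x / (M x)^2 * (a (sh 1 x) / M x - b (sh 1 x) / M (sh (-1) x))
      + K2 x / (M x)^2 * (a (sh 2 x) / M (sh 1 x) - b (sh 2 x) / M x)
      + K3 x / (M x)^2 * (a (sh 3 x) / M (sh 2 x) - b (sh 3 x) / M (sh 1 x))
      = W_rhs (\<lambda>j. N (sh j x) / M (sh j x))"
  shows "maps_to_W F ndF G ndG"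
  unfolding maps_to_W_def
proof (intro allI impI)
  fix u
  assume H: "lattice_solution F ndF u \<and> (\<forall>n t. ndG (shifts u n t)) \<and> (\<forall>n t. transform G u n t \<noteq> 0)"
  then have ndF: "\<And>n t. ndF (shifts u n t)"
    and der: "\<And>n t. ((\<lambda>s. u n s) has_vector_derivative F (shifts u n t)) (at t)"
    and ndG: "\<And>n t. ndG (shifts u n t)" and nz: "\<And>n t. transform G u n t \<noteq> 0"
    unfolding lattice_solution_def by auto
  have Geq: "\<And>m s. G (shifts u m s) = N (shifts u m s) / M (shifts u m s)"
    using G_eq ndG by blast
  show "W_solution (transform G u)" unfolding W_solution_def
  proof (intro allI)
    fix n t
    define x where "x = shifts u n t"
    have shx: "\<And>j. shifts u (n + j) t = sh j x" unfolding x_def by (rule shifts_add)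
    have Mnz: "M (sh j x) \<noteq> 0" for j
      using G_eq[OF ndG[of "n+j" t]] shx by auto
    have Nnz: "N (sh j x) \<noteq> 0" for j
      using nz[of "n+j" t] Geq[of "n+j" t] shx unfolding transform_def by auto
    have Feq: "F (sh k x) = a (sh k x) / M (sh (k - 1) x) - b (sh k x) / M (sh (k - 2) x)" for k
    proof -
      have nd: "ndF (sh k x)" using ndF[of "n+k" t] shx by simp
      have e: "sh (-1) (sh k x) = sh (k - 1) x" "sh (-2) (sh k x) = sh (k - 2) x"
        by (simp_all add: sh_sh)
      show ?thesis using F_eq[OF nd] Mnz unfolding e by simp
    qed
    have d0: "((\<lambda>s. u n s) has_vector_derivative F (sh 0 x)) (at t)"
      using der[of n t] unfolding x_def by simp
    have d1: "((\<lambda>s. u (n+1) s) has_vector_derivative F (sh 1 x)) (at t)"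
      using der[of "n+1" t] shx by simp
    have d2: "((\<lambda>s. u (n+2) s) has_vector_derivative F (sh 2 x)) (at t)"
      using der[of "n+2" t] shx by simp
    have d3: "((\<lambda>s. u (n+3) s) has_vector_derivative F (sh 3 x)) (at t)"
      using der[of "n+3" t] shx by simp
    have funeq: "(\<lambda>s. transform G u n s) = (\<lambda>s. N (shifts u n s) / M (shifts u n s))"
      unfolding transform_def using Geq by simp
    have sw: "shifts (transform G u) n t = (\<lambda>j. N (sh j x) / M (sh j x))"
    proof
      fix j
      have "shifts (transform G u) n t j = G (shifts u (n + j) t)"
        by (simp add: shifts_def transform_def)
      then show "shifts (transform G u) n t j = N (sh j x) / M (sh j x)"
        using Geq[of "n+j" t] shx[of j] by simp
    qed
    have M0: "M (shifts u n t) \<noteq> 0" using Mnz[of 0] unfolding x_def by simp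
    have D: "((\<lambda>s. transform G u n s) has_vector_derivative
          (K0 x / (M x)^2 * F (sh 0 x) + K1 x / (M x)^2 * F (sh 1 x)
         + K2 x / (M x)^2 * F (sh 2 x) + K3 x / (M x)^2 * F (sh 3 x))) (at t)"
      unfolding funeq using chain[OF d0 d1 d2 d3 M0] unfolding x_def .
    have F0: "F (sh 0 x) = a x / M (sh (-1) x) - b x / M (sh (-2) x)" using Feq[of 0] by simp
    have F1: "F (sh 1 x) = a (sh 1 x) / M x - b (sh 1 x) / M (sh (-1) x)" using Feq[of 1] by simp
    have F2: "F (sh 2 x) = a (sh 2 x) / M (sh 1 x) - b (sh 2 x) / M x" using Feq[of 2] by simp
    have F3: "F (sh 3 x) = a (sh 3 x) / M (sh 2 x) - b (sh 3 x) / M (sh 1 x)" using Feq[of 3] by simp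
    show "((\<lambda>s. transform G u n s) has_vector_derivative W_rhs (shifts (transform G u) n t)) (at t)"
      using D unfolding F0 F1 F2 F3 sw alg[OF allI[OF Mnz] allI[OF Nnz]] .
  qed
qed



definition NNa :: "(int \<Rightarrow> complex) \<Rightarrow> complex" where
  "NNa v = (v 3 - v 1) * (v 2 - v 0)"

definition MMa :: "(int \<Rightarrow> complex) \<Rightarrow> complex" where
  "MMa v = 2 * ((v 3 - v 2) * (v 1 - v 0)) - (v 3 - v 1) * (v 2 - v 0)"

definition AAa :: "(int \<Rightarrow> complex) \<Rightarrow> complex" where
  "AAa v = 2 * (v 2 - v 0) * (v 0 - v 1) * (v 0 - v (-1))"

definition BBa :: "(int \<Rightarrow> complex) \<Rightarrow> complex" where
  "BBa v = 2 * (v (-2) - v 0) * (v 0 - v 1) * (v 0 - v (-1))"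

definition dN0a :: "(int \<Rightarrow> complex) \<Rightarrow> complex" where
  "dN0a v = (((v 1)) - ((v 3)))"

definition dM0a :: "(int \<Rightarrow> complex) \<Rightarrow> complex" where
  "dM0a v = (- ((v 1)) + (2 * (v 2)) - ((v 3)))"

definition dN1a :: "(int \<Rightarrow> complex) \<Rightarrow> complex" where
  "dN1a v = (((v 0)) - ((v 2)))"

definition dM1a :: "(int \<Rightarrow> complex) \<Rightarrow> complex" where
  "dM1a v = (- ((v 0)) - ((v 2)) + (2 * (v 3)))"

definition dN2a :: "(int \<Rightarrow> complex) \<Rightarrow> complex" where
  "dN2a v = (- ((v 1)) + ((v 3)))"

definition dM2a :: "(int \<Rightarrow> complex) \<Rightarrow> complex" where
  "dM2a v = ((2 * (v 0)) - ((v 1)) - ((v 3)))"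

definition dN3a :: "(int \<Rightarrow> complex) \<Rightarrow> complex" where
  "dN3a v = (- ((v 0)) + ((v 2)))"

definition dM3a :: "(int \<Rightarrow> complex) \<Rightarrow> complex" where
  "dM3a v = (- ((v 0)) + (2 * (v 1)) - ((v 2)))"

definition KK0a :: "(int \<Rightarrow> complex) \<Rightarrow> complex" where
  "KK0a v = dN0a v * MMa v - NNa v * dM0a v"

definition KK1a :: "(int \<Rightarrow> complex) \<Rightarrow> complex" where
  "KK1a v = dN1a v * MMa v - NNa v * dM1a v"

definition KK2a :: "(int \<Rightarrow> complex) \<Rightarrow> complex" where
  "KK2a v = dN2a v * MMa v - NNa v * dM2a v"

definition KK3a :: "(int \<Rightarrow> complex) \<Rightarrow> complex" where
  "KK3a v = dN3a v * MMa v - NNa v * dM3a v"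

definition YY1a :: "(int \<Rightarrow> complex) \<Rightarrow> complex" where
  "YY1a v = 0"

definition YY2a :: "(int \<Rightarrow> complex) \<Rightarrow> complex" where
  "YY2a v = 0"

definition YY3a :: "(int \<Rightarrow> complex) \<Rightarrow> complex" where
  "YY3a v = NNa v * (MMa v + NNa v)"

definition YY4a :: "(int \<Rightarrow> complex) \<Rightarrow> complex" where
  "YY4a v = - (NNa v * (MMa v + NNa v))"

definition YY5a :: "(int \<Rightarrow> complex) \<Rightarrow> complex" where
  "YY5a v = 0"

lemma a_p1: "KK3a x * AAa (sh 3 x) * NNa (sh 1 x) - NNa x * (MMa x + NNa x) * NNa (sh 2 x) * (MMa (sh 1 x) + NNa (sh 1 x)) = YY1a x * MMa (sh 2 x) * NNa (sh 1 x)"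
  apply (simp only: NNa_def MMa_def AAa_def BBa_def KK0a_def KK1a_def KK2a_def KK3a_def dN0a_def dN1a_def dN2a_def dN3a_def dM0a_def dM1a_def dM2a_def dM3a_def YY1a_def YY2a_def YY3a_def YY4a_def YY5a_def sh_apply idx_simps add_0_right add_0_left)
  apply (algebra)?
  done

lemma a_p2: "KK0a x * BBa x * NNa (sh (-1) x) - NNa x * (MMa x + NNa x) * NNa (sh (-2) x) * (MMa (sh (-1) x) + NNa (sh (-1) x)) = YY2a x * MMa (sh (-2) x) * NNa (sh (-1) x)"
  apply (simp only: NNa_def MMa_def AAa_def BBa_def KK0a_def KK1a_def KK2a_def KK3a_def dN0a_def dN1a_def dN2a_def dN3a_def dM0a_def dM1a_def dM2a_def dM3a_def YY1a_def YY2a_def YY3a_def YY4a_def YY5a_def sh_apply idx_simps add_0_right add_0_left)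
  apply (algebra)?
  done

lemma a_p3: "KK2a x * AAa (sh 2 x) - KK3a x * BBa (sh 3 x) - (MMa x + NNa x) * MMa x * NNa (sh 1 x) = YY3a x * MMa (sh 1 x)"
  apply (simp only: NNa_def MMa_def AAa_def BBa_def KK0a_def KK1a_def KK2a_def KK3a_def dN0a_def dN1a_def dN2a_def dN3a_def dM0a_def dM1a_def dM2a_def dM3a_def YY1a_def YY2a_def YY3a_def YY4a_def YY5a_def sh_apply idx_simps add_0_right add_0_left)
  apply (algebra)?
  done

lemma a_p4: "KK0a x * AAa x - KK1a x * BBa (sh 1 x) + (MMa x + NNa x) * MMa x * NNa (sh (-1) x) = YY4a x * MMa (sh (-1) x)"
  apply (simp only: NNa_def MMa_def AAa_def BBa_def KK0a_def KK1a_def KK2a_def KK3a_def dN0a_def dN1a_def dN2a_def dN3a_def dM0a_def dM1a_def dM2a_def dM3a_def YY1a_def YY2a_def YY3a_def YY4a_def YY5a_def sh_apply idx_simps add_0_right add_0_left)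
  apply (algebra)?
  done

lemma a_p5: "KK1a x * AAa (sh 1 x) - KK2a x * BBa (sh 2 x) = YY5a x * MMa x"
  apply (simp only: NNa_def MMa_def AAa_def BBa_def KK0a_def KK1a_def KK2a_def KK3a_def dN0a_def dN1a_def dN2a_def dN3a_def dM0a_def dM1a_def dM2a_def dM3a_def YY1a_def YY2a_def YY3a_def YY4a_def YY5a_def sh_apply idx_simps add_0_right add_0_left)
  apply (algebra)?
  done

lemma a_p6: "YY1a x - YY2a x + YY3a x + YY4a x + YY5a x = 0"
  apply (simp only: NNa_def MMa_def AAa_def BBa_def KK0a_def KK1a_def KK2a_def KK3a_def dN0a_def dN1a_def dN2a_def dN3a_def dM0a_def dM1a_def dM2a_def dM3a_def YY1a_def YY2a_def YY3a_def YY4a_def YY5a_def sh_apply idx_simps add_0_right add_0_left)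
  apply (algebra)?
  done

lemma chain_a:
  assumes d0: "((\<lambda>s. u n s) has_vector_derivative y0) (at t)"
    and d1: "((\<lambda>s. u (n+1) s) has_vector_derivative y1) (at t)"
    and d2: "((\<lambda>s. u (n+2) s) has_vector_derivative y2) (at t)"
    and d3: "((\<lambda>s. u (n+3) s) has_vector_derivative y3) (at t)"
    and nz: "MMa (shifts u n t) \<noteq> 0"
  shows "((\<lambda>s. NNa (shifts u n s) / MMa (shifts u n s)) has_vector_derivative (KK0a (shifts u n t) / (MMa (shifts u n t))^2 * y0 + KK1a (shifts u n t) / (MMa (shifts u n t))^2 * y1 + KK2a (shifts u n t) / (MMa (shifts u n t))^2 * y2 + KK3a (shifts u n t) / (MMa (shifts u n t))^2 * y3)) (at t)"
proof -
  have dN: "((\<lambda>s. NNa (shifts u n s)) has_vector_derivative (dN0a (shifts u n t) * y0 + dN1a (shifts u n t) * y1 + dN2a (shifts u n t) * y2 + dN3a (shifts u n t) * y3)) (at t)"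
    unfolding NNa_def shifts_def add_0_right power2_eq_square
    apply (rule vd_eq)
     apply (rule has_vector_derivative_mult has_vector_derivative_add has_vector_derivative_diff
        has_vector_derivative_minus has_vector_derivative_const d0 d1 d2 d3)+
    unfolding dN0a_def dN1a_def dN2a_def dN3a_def add_0_right
    by algebra
  have dM: "((\<lambda>s. MMa (shifts u n s)) has_vector_derivative (dM0a (shifts u n t) * y0 + dM1a (shifts u n t) * y1 + dM2a (shifts u n t) * y2 + dM3a (shifts u n t) * y3)) (at t)"
    unfolding MMa_def shifts_def add_0_right power2_eq_square
    apply (rule vd_eq)
     apply (rule has_vector_derivative_mult has_vector_derivative_add has_vector_derivative_diff
        has_vector_derivative_minus has_vector_derivative_const d0 d1 d2 d3)+
    unfolding dM0a_def dM1a_def dM2a_def dM3a_def add_0_right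
    by algebra
  show ?thesis
    apply (rule vd_eq[OF quot_vd[OF dN dM nz]])
    unfolding KK0a_def KK1a_def KK2a_def KK3a_def by (rule quot_lin[OF nz])
qed

lemma alg_a:
  assumes Mn: "\<forall>j. MMa (sh j x) \<noteq> 0" and Nn: "\<forall>j. NNa (sh j x) \<noteq> 0"
  shows "KK0a x / (MMa x)^2 * (AAa x / MMa (sh (-1) x) - BBa x / MMa (sh (-2) x))
      + KK1a x / (MMa x)^2 * (AAa (sh 1 x) / MMa x - BBa (sh 1 x) / MMa (sh (-1) x))
      + KK2a x / (MMa x)^2 * (AAa (sh 2 x) / MMa (sh 1 x) - BBa (sh 2 x) / MMa x)
      + KK3a x / (MMa x)^2 * (AAa (sh 3 x) / MMa (sh 2 x) - BBa (sh 3 x) / MMa (sh 1 x))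
      = W_rhs (\<lambda>j. NNa (sh j x) / MMa (sh j x))"
proof -
  have m: "MMa (sh (-2) x) \<noteq> 0" "MMa (sh (-1) x) \<noteq> 0" "MMa x \<noteq> 0" "MMa (sh 1 x) \<noteq> 0" "MMa (sh 2 x) \<noteq> 0"
    using Mn[rule_format, of "-2"] Mn[rule_format, of "-1"] Mn[rule_format, of 0] Mn[rule_format, of 1] Mn[rule_format, of 2] by simp_all
  have nn: "NNa (sh (-2) x) \<noteq> 0" "NNa (sh (-1) x) \<noteq> 0" "NNa x \<noteq> 0" "NNa (sh 1 x) \<noteq> 0" "NNa (sh 2 x) \<noteq> 0"
    using Nn[rule_format, of "-2"] Nn[rule_format, of "-1"] Nn[rule_format, of 0] Nn[rule_format, of 1] Nn[rule_format, of 2] by simp_all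
  show ?thesis unfolding W_rhs_def sh_0
    by (rule combine[OF m nn a_p1 a_p2 a_p3 a_p4 a_p5 a_p6])
qed

lemma recip3: fixes \<alpha> \<beta> \<gamma> :: complex
  assumes "\<alpha> \<noteq> 0" "\<beta> \<noteq> 0" "\<gamma> \<noteq> 0"
  shows "1 / (2 / \<alpha> + 1 / \<beta> + 1 / \<gamma>) = \<alpha> * \<beta> * \<gamma> / (2 * \<beta> * \<gamma> + \<alpha> * \<gamma> + \<alpha> * \<beta>)"
proof -
  have "2 / \<alpha> + 1 / \<beta> + 1 / \<gamma> = (2 * \<beta> * \<gamma> + \<alpha> * \<gamma> + \<alpha> * \<beta>) / (\<alpha> * \<beta> * \<gamma>)"
    using assms by (simp add: field_simps)
  then show ?thesis by simp
qed

lemma aux_a: fixes R S :: complex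
  assumes "S \<noteq> 0" "2 * R / S - 1 \<noteq> 0"
  shows "2 * R - S \<noteq> 0 \<and> 1 / (2 * R / S - 1) = S / (2 * R - S)"
proof -
  have e: "2 * R / S - 1 = (2 * R - S) / S" using assms by (simp add: field_simps)
  show ?thesis using assms unfolding e by auto
qed

lemma G_eq_a: "ndG_a v \<Longrightarrow> MMa v \<noteq> 0 \<and> G_a v = NNa v / MMa v"
  unfolding ndG_a_def G_a_def MMa_def NNa_def
  using aux_a[of "(v 3 - v 1) * (v 2 - v 0)" "(v 3 - v 2) * (v 1 - v 0)"] by auto

lemma F_eq_a:
  assumes nd: "ndF_a v" and m1: "MMa (sh (-1) v) \<noteq> 0" and m2: "MMa (sh (-2) v) \<noteq> 0"
  shows "F_a v = AAa v / MMa (sh (-1) v) - BBa v / MMa (sh (-2) v)"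
proof -
  have n: "v 2 - v 0 \<noteq> 0" "v 0 - v 1 \<noteq> 0" "v 0 - v (-1) \<noteq> 0" "v (-2) - v 0 \<noteq> 0"
    using nd unfolding ndF_a_def by auto
  have e1: "2 * (v 0 - v 1) * (v 0 - v (-1)) + (v 2 - v 0) * (v 0 - v (-1)) + (v 2 - v 0) * (v 0 - v 1) = MMa (sh (-1) v)"
    apply (simp add: MMa_def sh_apply)
    apply (algebra)?
    done
  have e2: "2 * (v 0 - v 1) * (v 0 - v (-1)) + (v (-2) - v 0) * (v 0 - v (-1)) + (v (-2) - v 0) * (v 0 - v 1) = MMa (sh (-2) v)"
    apply (simp add: MMa_def sh_apply)
    apply (algebra)?
    done
  have "F_a v = 2 * ((v 2 - v 0) * (v 0 - v 1) * (v 0 - v (-1)) / MMa (sh (-1) v)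
      - (v (-2) - v 0) * (v 0 - v 1) * (v 0 - v (-1)) / MMa (sh (-2) v))"
    unfolding F_a_def recip3[OF n(1) n(2) n(3)] recip3[OF n(4) n(2) n(3)] e1 e2 ..
  also have "\<dots> = AAa v / MMa (sh (-1) v) - BBa v / MMa (sh (-2) v)"
    unfolding AAa_def BBa_def using m1 m2 by (simp add: field_simps)
  finally show ?thesis .
qed

lemma maps_a: "maps_to_W F_a ndF_a G_a ndG_a"
  by (rule framework[OF G_eq_a F_eq_a chain_a alg_a])



definition NNc :: "(int \<Rightarrow> complex) \<Rightarrow> complex" where
  "NNc v = (v 3 - 2 * v 2 + v 1) * (v 2 - 2 * v 1 + v 0)"

definition MMc :: "(int \<Rightarrow> complex) \<Rightarrow> complex" where
  "MMc v = 2 - 2 * (v 2 - v 1)^2 - (v 3 - 2 * v 2 + v 1) * (v 2 - 2 * v 1 + v 0)"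

definition AAc :: "(int \<Rightarrow> complex) \<Rightarrow> complex" where
  "AAc v = 2 * ((v 2 - v 0 - 2) * (v 1 - v 0 + 1) * (v (-1) - v 0 + 1))"

definition BBc :: "(int \<Rightarrow> complex) \<Rightarrow> complex" where
  "BBc v = 2 * ((v (-2) - v 0 + 2) * (v 1 - v 0 - 1) * (v (-1) - v 0 - 1))"

definition dN0c :: "(int \<Rightarrow> complex) \<Rightarrow> complex" where
  "dN0c v = (((v 1)) - (2 * (v 2)) + ((v 3)))"

definition dM0c :: "(int \<Rightarrow> complex) \<Rightarrow> complex" where
  "dM0c v = (- ((v 1)) + (2 * (v 2)) - ((v 3)))"

definition dN1c :: "(int \<Rightarrow> complex) \<Rightarrow> complex" where
  "dN1c v = (((v 0)) - (4 * (v 1)) + (5 * (v 2)) - (2 * (v 3)))"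

definition dM1c :: "(int \<Rightarrow> complex) \<Rightarrow> complex" where
  "dM1c v = (- ((v 0)) - ((v 2)) + (2 * (v 3)))"

definition dN2c :: "(int \<Rightarrow> complex) \<Rightarrow> complex" where
  "dN2c v = (- (2 * (v 0)) + (5 * (v 1)) - (4 * (v 2)) + ((v 3)))"

definition dM2c :: "(int \<Rightarrow> complex) \<Rightarrow> complex" where
  "dM2c v = ((2 * (v 0)) - ((v 1)) - ((v 3)))"

definition dN3c :: "(int \<Rightarrow> complex) \<Rightarrow> complex" where
  "dN3c v = (((v 0)) - (2 * (v 1)) + ((v 2)))"

definition dM3c :: "(int \<Rightarrow> complex) \<Rightarrow> complex" where
  "dM3c v = (- ((v 0)) + (2 * (v 1)) - ((v 2)))"

definition KK0c :: "(int \<Rightarrow> complex) \<Rightarrow> complex" where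
  "KK0c v = dN0c v * MMc v - NNc v * dM0c v"

definition KK1c :: "(int \<Rightarrow> complex) \<Rightarrow> complex" where
  "KK1c v = dN1c v * MMc v - NNc v * dM1c v"

definition KK2c :: "(int \<Rightarrow> complex) \<Rightarrow> complex" where
  "KK2c v = dN2c v * MMc v - NNc v * dM2c v"

definition KK3c :: "(int \<Rightarrow> complex) \<Rightarrow> complex" where
  "KK3c v = dN3c v * MMc v - NNc v * dM3c v"

definition YY1c :: "(int \<Rightarrow> complex) \<Rightarrow> complex" where
  "YY1c v = KK3c v * (2 * v 3 - 2 * v 2 - 2)"

definition YY2c :: "(int \<Rightarrow> complex) \<Rightarrow> complex" where
  "YY2c v = KK0c v * (2 + 2 * v 0 - 2 * v 1)"

definition YY3c :: "(int \<Rightarrow> complex) \<Rightarrow> complex" where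
  "YY3c v = KK3c v * (v 3 - v 1 - 2) + KK2c v * (2 * v 2 - 2 * v 1 - 2)"

definition YY4c :: "(int \<Rightarrow> complex) \<Rightarrow> complex" where
  "YY4c v = KK0c v * (v 2 - v 0 - 2) + KK1c v * (2 * v 2 - 2 * v 1 - 2)"

definition YY5c :: "(int \<Rightarrow> complex) \<Rightarrow> complex" where
  "YY5c v = (KK1c v + KK2c v) * (2 * v 2 - 2 * v 1 - 2)"

lemma c_p1: "KK3c x * AAc (sh 3 x) * NNc (sh 1 x) - NNc x * (MMc x + NNc x) * NNc (sh 2 x) * (MMc (sh 1 x) + NNc (sh 1 x)) = YY1c x * MMc (sh 2 x) * NNc (sh 1 x)"
  apply (simp only: NNc_def MMc_def AAc_def BBc_def KK0c_def KK1c_def KK2c_def KK3c_def dN0c_def dN1c_def dN2c_def dN3c_def dM0c_def dM1c_def dM2c_def dM3c_def YY1c_def YY2c_def YY3c_def YY4c_def YY5c_def sh_apply idx_simps add_0_right add_0_left)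
  apply (algebra)?
  done

lemma c_p2: "KK0c x * BBc x * NNc (sh (-1) x) - NNc x * (MMc x + NNc x) * NNc (sh (-2) x) * (MMc (sh (-1) x) + NNc (sh (-1) x)) = YY2c x * MMc (sh (-2) x) * NNc (sh (-1) x)"
  apply (simp only: NNc_def MMc_def AAc_def BBc_def KK0c_def KK1c_def KK2c_def KK3c_def dN0c_def dN1c_def dN2c_def dN3c_def dM0c_def dM1c_def dM2c_def dM3c_def YY1c_def YY2c_def YY3c_def YY4c_def YY5c_def sh_apply idx_simps add_0_right add_0_left)
  apply (algebra)?
  done

lemma c_p3: "KK2c x * AAc (sh 2 x) - KK3c x * BBc (sh 3 x) - (MMc x + NNc x) * MMc x * NNc (sh 1 x) = YY3c x * MMc (sh 1 x)"
  apply (simp only: NNc_def MMc_def AAc_def BBc_def KK0c_def KK1c_def KK2c_def KK3c_def dN0c_def dN1c_def dN2c_def dN3c_def dM0c_def dM1c_def dM2c_def dM3c_def YY1c_def YY2c_def YY3c_def YY4c_def YY5c_def sh_apply idx_simps add_0_right add_0_left)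
  apply (algebra)?
  done

lemma c_p4: "KK0c x * AAc x - KK1c x * BBc (sh 1 x) + (MMc x + NNc x) * MMc x * NNc (sh (-1) x) = YY4c x * MMc (sh (-1) x)"
  apply (simp only: NNc_def MMc_def AAc_def BBc_def KK0c_def KK1c_def KK2c_def KK3c_def dN0c_def dN1c_def dN2c_def dN3c_def dM0c_def dM1c_def dM2c_def dM3c_def YY1c_def YY2c_def YY3c_def YY4c_def YY5c_def sh_apply idx_simps add_0_right add_0_left)
  apply (algebra)?
  done

lemma c_p5: "KK1c x * AAc (sh 1 x) - KK2c x * BBc (sh 2 x) = YY5c x * MMc x"
  apply (simp only: NNc_def MMc_def AAc_def BBc_def KK0c_def KK1c_def KK2c_def KK3c_def dN0c_def dN1c_def dN2c_def dN3c_def dM0c_def dM1c_def dM2c_def dM3c_def YY1c_def YY2c_def YY3c_def YY4c_def YY5c_def sh_apply idx_simps add_0_right add_0_left)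
  apply (algebra)?
  done

lemma c_p6: "YY1c x - YY2c x + YY3c x + YY4c x + YY5c x = 0"
  apply (simp only: NNc_def MMc_def AAc_def BBc_def KK0c_def KK1c_def KK2c_def KK3c_def dN0c_def dN1c_def dN2c_def dN3c_def dM0c_def dM1c_def dM2c_def dM3c_def YY1c_def YY2c_def YY3c_def YY4c_def YY5c_def sh_apply idx_simps add_0_right add_0_left)
  apply (algebra)?
  done

lemma chain_c:
  assumes d0: "((\<lambda>s. u n s) has_vector_derivative y0) (at t)"
    and d1: "((\<lambda>s. u (n+1) s) has_vector_derivative y1) (at t)"
    and d2: "((\<lambda>s. u (n+2) s) has_vector_derivative y2) (at t)"
    and d3: "((\<lambda>s. u (n+3) s) has_vector_derivative y3) (at t)"
    and nz: "MMc (shifts u n t) \<noteq> 0"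
  shows "((\<lambda>s. NNc (shifts u n s) / MMc (shifts u n s)) has_vector_derivative (KK0c (shifts u n t) / (MMc (shifts u n t))^2 * y0 + KK1c (shifts u n t) / (MMc (shifts u n t))^2 * y1 + KK2c (shifts u n t) / (MMc (shifts u n t))^2 * y2 + KK3c (shifts u n t) / (MMc (shifts u n t))^2 * y3)) (at t)"
proof -
  have dN: "((\<lambda>s. NNc (shifts u n s)) has_vector_derivative (dN0c (shifts u n t) * y0 + dN1c (shifts u n t) * y1 + dN2c (shifts u n t) * y2 + dN3c (shifts u n t) * y3)) (at t)"
    unfolding NNc_def shifts_def add_0_right power2_eq_square
    apply (rule vd_eq)
     apply (rule has_vector_derivative_mult has_vector_derivative_add has_vector_derivative_diff
        has_vector_derivative_minus has_vector_derivative_const d0 d1 d2 d3)+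
    unfolding dN0c_def dN1c_def dN2c_def dN3c_def add_0_right
    by algebra
  have dM: "((\<lambda>s. MMc (shifts u n s)) has_vector_derivative (dM0c (shifts u n t) * y0 + dM1c (shifts u n t) * y1 + dM2c (shifts u n t) * y2 + dM3c (shifts u n t) * y3)) (at t)"
    unfolding MMc_def shifts_def add_0_right power2_eq_square
    apply (rule vd_eq)
     apply (rule has_vector_derivative_mult has_vector_derivative_add has_vector_derivative_diff
        has_vector_derivative_minus has_vector_derivative_const d0 d1 d2 d3)+
    unfolding dM0c_def dM1c_def dM2c_def dM3c_def add_0_right
    by algebra
  show ?thesis
    apply (rule vd_eq[OF quot_vd[OF dN dM nz]])
    unfolding KK0c_def KK1c_def KK2c_def KK3c_def by (rule quot_lin[OF nz])
qed

lemma alg_c: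
  assumes Mn: "\<forall>j. MMc (sh j x) \<noteq> 0" and Nn: "\<forall>j. NNc (sh j x) \<noteq> 0"
  shows "KK0c x / (MMc x)^2 * (AAc x / MMc (sh (-1) x) - BBc x / MMc (sh (-2) x))
      + KK1c x / (MMc x)^2 * (AAc (sh 1 x) / MMc x - BBc (sh 1 x) / MMc (sh (-1) x))
      + KK2c x / (MMc x)^2 * (AAc (sh 2 x) / MMc (sh 1 x) - BBc (sh 2 x) / MMc x)
      + KK3c x / (MMc x)^2 * (AAc (sh 3 x) / MMc (sh 2 x) - BBc (sh 3 x) / MMc (sh 1 x))
      = W_rhs (\<lambda>j. NNc (sh j x) / MMc (sh j x))"
proof -
  have m: "MMc (sh (-2) x) \<noteq> 0" "MMc (sh (-1) x) \<noteq> 0" "MMc x \<noteq> 0" "MMc (sh 1 x) \<noteq> 0" "MMc (sh 2 x) \<noteq> 0"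
    using Mn[rule_format, of "-2"] Mn[rule_format, of "-1"] Mn[rule_format, of 0] Mn[rule_format, of 1] Mn[rule_format, of 2] by simp_all
  have nn: "NNc (sh (-2) x) \<noteq> 0" "NNc (sh (-1) x) \<noteq> 0" "NNc x \<noteq> 0" "NNc (sh 1 x) \<noteq> 0" "NNc (sh 2 x) \<noteq> 0"
    using Nn[rule_format, of "-2"] Nn[rule_format, of "-1"] Nn[rule_format, of 0] Nn[rule_format, of 1] Nn[rule_format, of 2] by simp_all
  show ?thesis unfolding W_rhs_def sh_0
    by (rule combine[OF m nn c_p1 c_p2 c_p3 c_p4 c_p5 c_p6])
qed

lemma recip_sub1: "(Q::complex) \<noteq> 0 \<Longrightarrow> 1 / (P / Q - 1) = Q / (P - Q)"
proof -
  assume "Q \<noteq> 0"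
  then have "P / Q - 1 = (P - Q) / Q" by (simp add: field_simps)
  then show ?thesis by simp
qed

lemma G_eq_c: "ndG_c v \<Longrightarrow> MMc v \<noteq> 0 \<and> G_c v = NNc v / MMc v"
  unfolding ndG_c_def G_c_def MMc_def NNc_def by simp

lemma F_eq_c:
  assumes nd: "ndF_c v" and m1: "MMc (sh (-1) v) \<noteq> 0" and m2: "MMc (sh (-2) v) \<noteq> 0"
  shows "F_c v = AAc v / MMc (sh (-1) v) - BBc v / MMc (sh (-2) v)"
proof -
  let ?P = "(v 2 - v 0 + 2) * (v 1 - v 0 - 1) * (v (-1) - v 0 - 1)"
  let ?Q = "(v 2 - v 0 - 2) * (v 1 - v 0 + 1) * (v (-1) - v 0 + 1)"
  let ?R = "(v (-2) - v 0 - 2) * (v 1 - v 0 + 1) * (v (-1) - v 0 + 1)"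
  let ?S = "(v (-2) - v 0 + 2) * (v 1 - v 0 - 1) * (v (-1) - v 0 - 1)"
  have q: "?Q \<noteq> 0" and s: "?S \<noteq> 0" using nd unfolding ndF_c_def by auto
  have e1: "?P - ?Q = 2 * MMc (sh (-1) v)"
    apply (simp add: MMc_def sh_apply)
    apply (algebra)?
    done
  have e2: "?R - ?S = - 2 * MMc (sh (-2) v)"
    apply (simp add: MMc_def sh_apply)
    apply (algebra)?
    done
  have "F_c v = 4 * (?Q / (?P - ?Q) + ?S / (?R - ?S))"
    unfolding F_c_def recip_sub1[OF q] recip_sub1[OF s] ..
  also have "\<dots> = 4 * (?Q / (2 * MMc (sh (-1) v)) + ?S / (- 2 * MMc (sh (-2) v)))"
    unfolding e1 e2 ..
  also have "\<dots> = AAc v / MMc (sh (-1) v) - BBc v / MMc (sh (-2) v)"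
    unfolding AAc_def BBc_def using m1 m2 by (simp add: field_simps)
  finally show ?thesis .
qed

lemma maps_c: "maps_to_W F_c ndF_c G_c ndG_c"
  by (rule framework[OF G_eq_c F_eq_c chain_c alg_c])



definition NNd :: "(int \<Rightarrow> complex) \<Rightarrow> complex" where
  "NNd v = - ((v 3 - v 1) * (v 2 - v 0))"

definition MMd :: "(int \<Rightarrow> complex) \<Rightarrow> complex" where
  "MMd v = (v 3 - v 1) * (v 2 - v 0) + (v 2 - v 1)"

definition AAd :: "(int \<Rightarrow> complex) \<Rightarrow> complex" where
  "AAd v = (v 0 - v (-1)) * (v 2 - v 0)"

definition BBd :: "(int \<Rightarrow> complex) \<Rightarrow> complex" where
  "BBd v = (v 0 - v 1) * (v 0 - v (-2))"

definition dN0d :: "(int \<Rightarrow> complex) \<Rightarrow> complex" where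
  "dN0d v = (- ((v 1)) + ((v 3)))"

definition dM0d :: "(int \<Rightarrow> complex) \<Rightarrow> complex" where
  "dM0d v = (((v 1)) - ((v 3)))"

definition dN1d :: "(int \<Rightarrow> complex) \<Rightarrow> complex" where
  "dN1d v = (- ((v 0)) + ((v 2)))"

definition dM1d :: "(int \<Rightarrow> complex) \<Rightarrow> complex" where
  "dM1d v = (- (1) + ((v 0)) - ((v 2)))"

definition dN2d :: "(int \<Rightarrow> complex) \<Rightarrow> complex" where
  "dN2d v = (((v 1)) - ((v 3)))"

definition dM2d :: "(int \<Rightarrow> complex) \<Rightarrow> complex" where
  "dM2d v = ((1) - ((v 1)) + ((v 3)))"

definition dN3d :: "(int \<Rightarrow> complex) \<Rightarrow> complex" where
  "dN3d v = (((v 0)) - ((v 2)))"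

definition dM3d :: "(int \<Rightarrow> complex) \<Rightarrow> complex" where
  "dM3d v = (- ((v 0)) + ((v 2)))"

definition KK0d :: "(int \<Rightarrow> complex) \<Rightarrow> complex" where
  "KK0d v = dN0d v * MMd v - NNd v * dM0d v"

definition KK1d :: "(int \<Rightarrow> complex) \<Rightarrow> complex" where
  "KK1d v = dN1d v * MMd v - NNd v * dM1d v"

definition KK2d :: "(int \<Rightarrow> complex) \<Rightarrow> complex" where
  "KK2d v = dN2d v * MMd v - NNd v * dM2d v"

definition KK3d :: "(int \<Rightarrow> complex) \<Rightarrow> complex" where
  "KK3d v = dN3d v * MMd v - NNd v * dM3d v"

definition YY1d :: "(int \<Rightarrow> complex) \<Rightarrow> complex" where
  "YY1d v = 0"

definition YY2d :: "(int \<Rightarrow> complex) \<Rightarrow> complex" where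
  "YY2d v = 0"

definition YY3d :: "(int \<Rightarrow> complex) \<Rightarrow> complex" where
  "YY3d v = KK3d v * (v 1 - v 3)"

definition YY4d :: "(int \<Rightarrow> complex) \<Rightarrow> complex" where
  "YY4d v = KK0d v * (v 0 - v 2)"

definition YY5d :: "(int \<Rightarrow> complex) \<Rightarrow> complex" where
  "YY5d v = 0"

lemma d_p1: "KK3d x * AAd (sh 3 x) * NNd (sh 1 x) - NNd x * (MMd x + NNd x) * NNd (sh 2 x) * (MMd (sh 1 x) + NNd (sh 1 x)) = YY1d x * MMd (sh 2 x) * NNd (sh 1 x)"
  apply (simp only: NNd_def MMd_def AAd_def BBd_def KK0d_def KK1d_def KK2d_def KK3d_def dN0d_def dN1d_def dN2d_def dN3d_def dM0d_def dM1d_def dM2d_def dM3d_def YY1d_def YY2d_def YY3d_def YY4d_def YY5d_def sh_apply idx_simps add_0_right add_0_left)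
  apply (algebra)?
  done

lemma d_p2: "KK0d x * BBd x * NNd (sh (-1) x) - NNd x * (MMd x + NNd x) * NNd (sh (-2) x) * (MMd (sh (-1) x) + NNd (sh (-1) x)) = YY2d x * MMd (sh (-2) x) * NNd (sh (-1) x)"
  apply (simp only: NNd_def MMd_def AAd_def BBd_def KK0d_def KK1d_def KK2d_def KK3d_def dN0d_def dN1d_def dN2d_def dN3d_def dM0d_def dM1d_def dM2d_def dM3d_def YY1d_def YY2d_def YY3d_def YY4d_def YY5d_def sh_apply idx_simps add_0_right add_0_left)
  apply (algebra)?
  done

lemma d_p3: "KK2d x * AAd (sh 2 x) - KK3d x * BBd (sh 3 x) - (MMd x + NNd x) * MMd x * NNd (sh 1 x) = YY3d x * MMd (sh 1 x)"
  apply (simp only: NNd_def MMd_def AAd_def BBd_def KK0d_def KK1d_def KK2d_def KK3d_def dN0d_def dN1d_def dN2d_def dN3d_def dM0d_def dM1d_def dM2d_def dM3d_def YY1d_def YY2d_def YY3d_def YY4d_def YY5d_def sh_apply idx_simps add_0_right add_0_left)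
  apply (algebra)?
  done

lemma d_p4: "KK0d x * AAd x - KK1d x * BBd (sh 1 x) + (MMd x + NNd x) * MMd x * NNd (sh (-1) x) = YY4d x * MMd (sh (-1) x)"
  apply (simp only: NNd_def MMd_def AAd_def BBd_def KK0d_def KK1d_def KK2d_def KK3d_def dN0d_def dN1d_def dN2d_def dN3d_def dM0d_def dM1d_def dM2d_def dM3d_def YY1d_def YY2d_def YY3d_def YY4d_def YY5d_def sh_apply idx_simps add_0_right add_0_left)
  apply (algebra)?
  done

lemma d_p5: "KK1d x * AAd (sh 1 x) - KK2d x * BBd (sh 2 x) = YY5d x * MMd x"
  apply (simp only: NNd_def MMd_def AAd_def BBd_def KK0d_def KK1d_def KK2d_def KK3d_def dN0d_def dN1d_def dN2d_def dN3d_def dM0d_def dM1d_def dM2d_def dM3d_def YY1d_def YY2d_def YY3d_def YY4d_def YY5d_def sh_apply idx_simps add_0_right add_0_left)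
  apply (algebra)?
  done

lemma d_p6: "YY1d x - YY2d x + YY3d x + YY4d x + YY5d x = 0"
  apply (simp only: NNd_def MMd_def AAd_def BBd_def KK0d_def KK1d_def KK2d_def KK3d_def dN0d_def dN1d_def dN2d_def dN3d_def dM0d_def dM1d_def dM2d_def dM3d_def YY1d_def YY2d_def YY3d_def YY4d_def YY5d_def sh_apply idx_simps add_0_right add_0_left)
  apply (algebra)?
  done

lemma chain_d:
  assumes d0: "((\<lambda>s. u n s) has_vector_derivative y0) (at t)"
    and d1: "((\<lambda>s. u (n+1) s) has_vector_derivative y1) (at t)"
    and d2: "((\<lambda>s. u (n+2) s) has_vector_derivative y2) (at t)"
    and d3: "((\<lambda>s. u (n+3) s) has_vector_derivative y3) (at t)"
    and nz: "MMd (shifts u n t) \<noteq> 0"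
  shows "((\<lambda>s. NNd (shifts u n s) / MMd (shifts u n s)) has_vector_derivative (KK0d (shifts u n t) / (MMd (shifts u n t))^2 * y0 + KK1d (shifts u n t) / (MMd (shifts u n t))^2 * y1 + KK2d (shifts u n t) / (MMd (shifts u n t))^2 * y2 + KK3d (shifts u n t) / (MMd (shifts u n t))^2 * y3)) (at t)"
proof -
  have dN: "((\<lambda>s. NNd (shifts u n s)) has_vector_derivative (dN0d (shifts u n t) * y0 + dN1d (shifts u n t) * y1 + dN2d (shifts u n t) * y2 + dN3d (shifts u n t) * y3)) (at t)"
    unfolding NNd_def shifts_def add_0_right power2_eq_square
    apply (rule vd_eq)
     apply (rule has_vector_derivative_mult has_vector_derivative_add has_vector_derivative_diff
        has_vector_derivative_minus has_vector_derivative_const d0 d1 d2 d3)+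
    unfolding dN0d_def dN1d_def dN2d_def dN3d_def add_0_right
    by algebra
  have dM: "((\<lambda>s. MMd (shifts u n s)) has_vector_derivative (dM0d (shifts u n t) * y0 + dM1d (shifts u n t) * y1 + dM2d (shifts u n t) * y2 + dM3d (shifts u n t) * y3)) (at t)"
    unfolding MMd_def shifts_def add_0_right power2_eq_square
    apply (rule vd_eq)
     apply (rule has_vector_derivative_mult has_vector_derivative_add has_vector_derivative_diff
        has_vector_derivative_minus has_vector_derivative_const d0 d1 d2 d3)+
    unfolding dM0d_def dM1d_def dM2d_def dM3d_def add_0_right
    by algebra
  show ?thesis
    apply (rule vd_eq[OF quot_vd[OF dN dM nz]])
    unfolding KK0d_def KK1d_def KK2d_def KK3d_def by (rule quot_lin[OF nz])
qed

lemma alg_d: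
  assumes Mn: "\<forall>j. MMd (sh j x) \<noteq> 0" and Nn: "\<forall>j. NNd (sh j x) \<noteq> 0"
  shows "KK0d x / (MMd x)^2 * (AAd x / MMd (sh (-1) x) - BBd x / MMd (sh (-2) x))
      + KK1d x / (MMd x)^2 * (AAd (sh 1 x) / MMd x - BBd (sh 1 x) / MMd (sh (-1) x))
      + KK2d x / (MMd x)^2 * (AAd (sh 2 x) / MMd (sh 1 x) - BBd (sh 2 x) / MMd x)
      + KK3d x / (MMd x)^2 * (AAd (sh 3 x) / MMd (sh 2 x) - BBd (sh 3 x) / MMd (sh 1 x))
      = W_rhs (\<lambda>j. NNd (sh j x) / MMd (sh j x))"
proof -
  have m: "MMd (sh (-2) x) \<noteq> 0" "MMd (sh (-1) x) \<noteq> 0" "MMd x \<noteq> 0" "MMd (sh 1 x) \<noteq> 0" "MMd (sh 2 x) \<noteq> 0"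
    using Mn[rule_format, of "-2"] Mn[rule_format, of "-1"] Mn[rule_format, of 0] Mn[rule_format, of 1] Mn[rule_format, of 2] by simp_all
  have nn: "NNd (sh (-2) x) \<noteq> 0" "NNd (sh (-1) x) \<noteq> 0" "NNd x \<noteq> 0" "NNd (sh 1 x) \<noteq> 0" "NNd (sh 2 x) \<noteq> 0"
    using Nn[rule_format, of "-2"] Nn[rule_format, of "-1"] Nn[rule_format, of 0] Nn[rule_format, of 1] Nn[rule_format, of 2] by simp_all
  show ?thesis unfolding W_rhs_def sh_0
    by (rule combine[OF m nn d_p1 d_p2 d_p3 d_p4 d_p5 d_p6])
qed

lemma aux_d: fixes S T :: complex
  assumes "S \<noteq> 0" "1 + T / S \<noteq> 0"
  shows "S + T \<noteq> 0 \<and> - (1 / (1 + T / S)) = - S / (S + T)"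
proof -
  have e: "1 + T / S = (S + T) / S" using assms by (simp add: field_simps)
  show ?thesis using assms unfolding e by auto
qed

lemma frac_d: fixes p q r s :: complex
  assumes "s \<noteq> 0" shows "p / (q + r / s) = p * s / (q * s + r)"
proof -
  have "q + r / s = (q * s + r) / s" using assms by (simp add: field_simps)
  then show ?thesis by simp
qed

lemma G_eq_d: "ndG_d v \<Longrightarrow> MMd v \<noteq> 0 \<and> G_d v = NNd v / MMd v"
  unfolding ndG_d_def G_d_def MMd_def NNd_def
  using aux_d[of "(v 3 - v 1) * (v 2 - v 0)" "v 2 - v 1"] by auto

lemma F_eq_d:
  assumes nd: "ndF_d v" and m1: "MMd (sh (-1) v) \<noteq> 0" and m2: "MMd (sh (-2) v) \<noteq> 0"
  shows "F_d v = AAd v / MMd (sh (-1) v) - BBd v / MMd (sh (-2) v)"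
proof -
  have n: "v 0 - v 2 \<noteq> 0" "v 0 - v (-2) \<noteq> 0"
    using nd unfolding ndF_d_def by auto
  have e1: "(v 1 - v (-1)) * (v 0 - v 2) + (v 0 - v 1) = - MMd (sh (-1) v)"
    apply (simp add: MMd_def sh_apply)
    apply (algebra)?
    done
  have e2: "(v 1 - v (-1)) * (v 0 - v (-2)) + (v 0 - v (-1)) = MMd (sh (-2) v)"
    apply (simp add: MMd_def sh_apply)
    apply (algebra)?
    done
  have "F_d v = (v 0 - v (-1)) * (v 0 - v 2) / (- MMd (sh (-1) v))
      - (v 0 - v 1) * (v 0 - v (-2)) / MMd (sh (-2) v)"
    unfolding F_d_def frac_d[OF n(1)] frac_d[OF n(2)] e1 e2 ..
  also have "\<dots> = AAd v / MMd (sh (-1) v) - BBd v / MMd (sh (-2) v)"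
    unfolding AAd_def BBd_def using m1 m2 by (simp add: field_simps)
  finally show ?thesis .
qed

lemma maps_d: "maps_to_W F_d ndF_d G_d ndG_d"
  by (rule framework[OF G_eq_d F_eq_d chain_d alg_d])



definition NNi :: "complex \<Rightarrow> (int \<Rightarrow> complex) \<Rightarrow> complex" where
  "NNi g v = g * (g * v 0 - (1 + g^2) * v 1 + g * v 2) * (g * v 1 - (1 + g^2) * v 2 + g * v 3)"

definition MMi :: "complex \<Rightarrow> (int \<Rightarrow> complex) \<Rightarrow> complex" where
  "MMi g v = g^2 * ((g * v 0 - v 1) * (g * v 2 - v 3) - (g * v 1 - v 2) * (v 0 - g * v 3))"

definition AAi :: "complex \<Rightarrow> (int \<Rightarrow> complex) \<Rightarrow> complex" where
  "AAi g v = - (1 + g^2) * (v 0 - g * v (-1)) * (v 0 - g * v 1) * (g^2 * v 0 - v 2)"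

definition BBi :: "complex \<Rightarrow> (int \<Rightarrow> complex) \<Rightarrow> complex" where
  "BBi g v = - (1 + g^2) * (g * v 0 - v (-1)) * (g * v 0 - v 1) * (v 0 - g^2 * v (-2))"

definition dN0i :: "complex \<Rightarrow> (int \<Rightarrow> complex) \<Rightarrow> complex" where
  "dN0i g v = (- ((g)^2 * (v 2)) + ((g)^3 * (v 1)) + ((g)^3 * (v 3)) - ((g)^4 * (v 2)))"

definition dM0i :: "complex \<Rightarrow> (int \<Rightarrow> complex) \<Rightarrow> complex" where
  "dM0i g v = (((g)^2 * (v 2)) - ((g)^3 * (v 1)) - ((g)^3 * (v 3)) + ((g)^4 * (v 2)))"

definition dN1i :: "complex \<Rightarrow> (int \<Rightarrow> complex) \<Rightarrow> complex" where
  "dN1i g v = ((g * (v 2)) - (2 * (g)^2 * (v 1)) - ((g)^2 * (v 3)) + ((g)^3 * (v 0)) + (3 * (g)^3 * (v 2)) - (2 * (g)^4 * (v 1)) - ((g)^4 * (v 3)) + ((g)^5 * (v 2)))"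

definition dM1i :: "complex \<Rightarrow> (int \<Rightarrow> complex) \<Rightarrow> complex" where
  "dM1i g v = (((g)^2 * (v 3)) - ((g)^3 * (v 0)) - ((g)^3 * (v 2)) + ((g)^4 * (v 3)))"

definition dN2i :: "complex \<Rightarrow> (int \<Rightarrow> complex) \<Rightarrow> complex" where
  "dN2i g v = ((g * (v 1)) - ((g)^2 * (v 0)) - (2 * (g)^2 * (v 2)) + (3 * (g)^3 * (v 1)) + ((g)^3 * (v 3)) - ((g)^4 * (v 0)) - (2 * (g)^4 * (v 2)) + ((g)^5 * (v 1)))"

definition dM2i :: "complex \<Rightarrow> (int \<Rightarrow> complex) \<Rightarrow> complex" where
  "dM2i g v = (((g)^2 * (v 0)) - ((g)^3 * (v 1)) - ((g)^3 * (v 3)) + ((g)^4 * (v 0)))"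

definition dN3i :: "complex \<Rightarrow> (int \<Rightarrow> complex) \<Rightarrow> complex" where
  "dN3i g v = (- ((g)^2 * (v 1)) + ((g)^3 * (v 0)) + ((g)^3 * (v 2)) - ((g)^4 * (v 1)))"

definition dM3i :: "complex \<Rightarrow> (int \<Rightarrow> complex) \<Rightarrow> complex" where
  "dM3i g v = (((g)^2 * (v 1)) - ((g)^3 * (v 0)) - ((g)^3 * (v 2)) + ((g)^4 * (v 1)))"

definition KK0i :: "complex \<Rightarrow> (int \<Rightarrow> complex) \<Rightarrow> complex" where
  "KK0i g v = dN0i g v * MMi g v - NNi g v * dM0i g v"

definition KK1i :: "complex \<Rightarrow> (int \<Rightarrow> complex) \<Rightarrow> complex" where
  "KK1i g v = dN1i g v * MMi g v - NNi g v * dM1i g v"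

definition KK2i :: "complex \<Rightarrow> (int \<Rightarrow> complex) \<Rightarrow> complex" where
  "KK2i g v = dN2i g v * MMi g v - NNi g v * dM2i g v"

definition KK3i :: "complex \<Rightarrow> (int \<Rightarrow> complex) \<Rightarrow> complex" where
  "KK3i g v = dN3i g v * MMi g v - NNi g v * dM3i g v"

definition ZZ1i :: "complex \<Rightarrow> (int \<Rightarrow> complex) \<Rightarrow> complex" where
  "ZZ1i g v = (1 + g^2) * KK3i g v * (v 3 - g * v 2)"

definition YY1i :: "complex \<Rightarrow> (int \<Rightarrow> complex) \<Rightarrow> complex" where
  "YY1i g v = ZZ1i g v / g^2"

definition ZZ2i :: "complex \<Rightarrow> (int \<Rightarrow> complex) \<Rightarrow> complex" where
  "ZZ2i g v = (1 + g^2) * KK0i g v * (g^2 * v 0 - g * v 1)"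

definition YY2i :: "complex \<Rightarrow> (int \<Rightarrow> complex) \<Rightarrow> complex" where
  "YY2i g v = ZZ2i g v / g^2"

definition ZZ3i :: "complex \<Rightarrow> (int \<Rightarrow> complex) \<Rightarrow> complex" where
  "ZZ3i g v = KK3i g v * (v 3 - g^2 * v 1) + (1 + g^2) * KK2i g v * (v 2 - g * v 1)"

definition YY3i :: "complex \<Rightarrow> (int \<Rightarrow> complex) \<Rightarrow> complex" where
  "YY3i g v = ZZ3i g v / g^2"

definition ZZ4i :: "complex \<Rightarrow> (int \<Rightarrow> complex) \<Rightarrow> complex" where
  "ZZ4i g v = g^2 * KK0i g v * (v 2 - g^2 * v 0) - (1 + g^2) * KK1i g v * (g^2 * v 1 - g * v 2)"

definition YY4i :: "complex \<Rightarrow> (int \<Rightarrow> complex) \<Rightarrow> complex" where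
  "YY4i g v = ZZ4i g v / g^2"

definition ZZ5i :: "complex \<Rightarrow> (int \<Rightarrow> complex) \<Rightarrow> complex" where
  "ZZ5i g v = (1 + g^2) * KK2i g v * (v 2 - g * v 1) + (1 + g^2) * KK1i g v * (g * v 2 - g^2 * v 1)"

definition YY5i :: "complex \<Rightarrow> (int \<Rightarrow> complex) \<Rightarrow> complex" where
  "YY5i g v = ZZ5i g v / g^2"

lemma i_p1:
  assumes gnz: "g \<noteq> 0"
  shows "KK3i g x * AAi g (sh 3 x) * NNi g (sh 1 x) - NNi g x * (MMi g x + NNi g x) * NNi g (sh 2 x) * (MMi g (sh 1 x) + NNi g (sh 1 x)) = YY1i g x * MMi g (sh 2 x) * NNi g (sh 1 x)"
proof -
  have "g^2 * (KK3i g x * AAi g (sh 3 x) * NNi g (sh 1 x) - NNi g x * (MMi g x + NNi g x) * NNi g (sh 2 x) * (MMi g (sh 1 x) + NNi g (sh 1 x))) = ZZ1i g x * MMi g (sh 2 x) * NNi g (sh 1 x)"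
    apply (simp only: NNi_def MMi_def AAi_def BBi_def KK0i_def KK1i_def KK2i_def KK3i_def dN0i_def dN1i_def dN2i_def dN3i_def dM0i_def dM1i_def dM2i_def dM3i_def ZZ1i_def ZZ2i_def ZZ3i_def ZZ4i_def ZZ5i_def sh_apply idx_simps add_0_right add_0_left)
    apply (algebra)?
    done
  then show ?thesis using gnz unfolding YY1i_def YY2i_def YY3i_def YY4i_def YY5i_def by (simp add: field_simps)
qed

lemma i_p2:
  assumes gnz: "g \<noteq> 0"
  shows "KK0i g x * BBi g x * NNi g (sh (-1) x) - NNi g x * (MMi g x + NNi g x) * NNi g (sh (-2) x) * (MMi g (sh (-1) x) + NNi g (sh (-1) x)) = YY2i g x * MMi g (sh (-2) x) * NNi g (sh (-1) x)"
proof -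
  have "g^2 * (KK0i g x * BBi g x * NNi g (sh (-1) x) - NNi g x * (MMi g x + NNi g x) * NNi g (sh (-2) x) * (MMi g (sh (-1) x) + NNi g (sh (-1) x))) = ZZ2i g x * MMi g (sh (-2) x) * NNi g (sh (-1) x)"
    apply (simp only: NNi_def MMi_def AAi_def BBi_def KK0i_def KK1i_def KK2i_def KK3i_def dN0i_def dN1i_def dN2i_def dN3i_def dM0i_def dM1i_def dM2i_def dM3i_def ZZ1i_def ZZ2i_def ZZ3i_def ZZ4i_def ZZ5i_def sh_apply idx_simps add_0_right add_0_left)
    apply (algebra)?
    done
  then show ?thesis using gnz unfolding YY1i_def YY2i_def YY3i_def YY4i_def YY5i_def by (simp add: field_simps)
qed

lemma i_p3:
  assumes gnz: "g \<noteq> 0"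
  shows "KK2i g x * AAi g (sh 2 x) - KK3i g x * BBi g (sh 3 x) - (MMi g x + NNi g x) * MMi g x * NNi g (sh 1 x) = YY3i g x * MMi g (sh 1 x)"
proof -
  have "g^2 * (KK2i g x * AAi g (sh 2 x) - KK3i g x * BBi g (sh 3 x) - (MMi g x + NNi g x) * MMi g x * NNi g (sh 1 x)) = ZZ3i g x * MMi g (sh 1 x)"
    apply (simp only: NNi_def MMi_def AAi_def BBi_def KK0i_def KK1i_def KK2i_def KK3i_def dN0i_def dN1i_def dN2i_def dN3i_def dM0i_def dM1i_def dM2i_def dM3i_def ZZ1i_def ZZ2i_def ZZ3i_def ZZ4i_def ZZ5i_def sh_apply idx_simps add_0_right add_0_left)
    apply (algebra)?
    done
  then show ?thesis using gnz unfolding YY1i_def YY2i_def YY3i_def YY4i_def YY5i_def by (simp add: field_simps)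
qed

lemma i_p4:
  assumes gnz: "g \<noteq> 0"
  shows "KK0i g x * AAi g x - KK1i g x * BBi g (sh 1 x) + (MMi g x + NNi g x) * MMi g x * NNi g (sh (-1) x) = YY4i g x * MMi g (sh (-1) x)"
proof -
  have "g^2 * (KK0i g x * AAi g x - KK1i g x * BBi g (sh 1 x) + (MMi g x + NNi g x) * MMi g x * NNi g (sh (-1) x)) = ZZ4i g x * MMi g (sh (-1) x)"
    apply (simp only: NNi_def MMi_def AAi_def BBi_def KK0i_def KK1i_def KK2i_def KK3i_def dN0i_def dN1i_def dN2i_def dN3i_def dM0i_def dM1i_def dM2i_def dM3i_def ZZ1i_def ZZ2i_def ZZ3i_def ZZ4i_def ZZ5i_def sh_apply idx_simps add_0_right add_0_left)
    apply (algebra)?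
    done
  then show ?thesis using gnz unfolding YY1i_def YY2i_def YY3i_def YY4i_def YY5i_def by (simp add: field_simps)
qed

lemma i_p5:
  assumes gnz: "g \<noteq> 0"
  shows "KK1i g x * AAi g (sh 1 x) - KK2i g x * BBi g (sh 2 x) = YY5i g x * MMi g x"
proof -
  have "g^2 * (KK1i g x * AAi g (sh 1 x) - KK2i g x * BBi g (sh 2 x)) = ZZ5i g x * MMi g x"
    apply (simp only: NNi_def MMi_def AAi_def BBi_def KK0i_def KK1i_def KK2i_def KK3i_def dN0i_def dN1i_def dN2i_def dN3i_def dM0i_def dM1i_def dM2i_def dM3i_def ZZ1i_def ZZ2i_def ZZ3i_def ZZ4i_def ZZ5i_def sh_apply idx_simps add_0_right add_0_left)
    apply (algebra)?
    done
  then show ?thesis using gnz unfolding YY1i_def YY2i_def YY3i_def YY4i_def YY5i_def by (simp add: field_simps)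
qed

lemma i_p6:
  assumes gnz: "g \<noteq> 0"
  shows "YY1i g x - YY2i g x + YY3i g x + YY4i g x + YY5i g x = 0"
proof -
  have "ZZ1i g x - ZZ2i g x + ZZ3i g x + ZZ4i g x + ZZ5i g x = 0"
    apply (simp only: NNi_def MMi_def AAi_def BBi_def KK0i_def KK1i_def KK2i_def KK3i_def dN0i_def dN1i_def dN2i_def dN3i_def dM0i_def dM1i_def dM2i_def dM3i_def ZZ1i_def ZZ2i_def ZZ3i_def ZZ4i_def ZZ5i_def sh_apply idx_simps add_0_right add_0_left)
    apply (algebra)?
    done
  then show ?thesis using gnz unfolding YY1i_def YY2i_def YY3i_def YY4i_def YY5i_def by (simp add: field_simps)
qed

lemma chain_i:
  assumes d0: "((\<lambda>s. u n s) has_vector_derivative y0) (at t)"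
    and d1: "((\<lambda>s. u (n+1) s) has_vector_derivative y1) (at t)"
    and d2: "((\<lambda>s. u (n+2) s) has_vector_derivative y2) (at t)"
    and d3: "((\<lambda>s. u (n+3) s) has_vector_derivative y3) (at t)"
    and nz: "MMi g (shifts u n t) \<noteq> 0"
  shows "((\<lambda>s. NNi g (shifts u n s) / MMi g (shifts u n s)) has_vector_derivative (KK0i g (shifts u n t) / (MMi g (shifts u n t))^2 * y0 + KK1i g (shifts u n t) / (MMi g (shifts u n t))^2 * y1 + KK2i g (shifts u n t) / (MMi g (shifts u n t))^2 * y2 + KK3i g (shifts u n t) / (MMi g (shifts u n t))^2 * y3)) (at t)"
proof -
  have dN: "((\<lambda>s. NNi g (shifts u n s)) has_vector_derivative (dN0i g (shifts u n t) * y0 + dN1i g (shifts u n t) * y1 + dN2i g (shifts u n t) * y2 + dN3i g (shifts u n t) * y3)) (at t)"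
    unfolding NNi_def shifts_def add_0_right power2_eq_square
    apply (rule vd_eq)
     apply (rule has_vector_derivative_mult has_vector_derivative_add has_vector_derivative_diff
        has_vector_derivative_minus has_vector_derivative_const d0 d1 d2 d3)+
    unfolding dN0i_def dN1i_def dN2i_def dN3i_def add_0_right
    by algebra
  have dM: "((\<lambda>s. MMi g (shifts u n s)) has_vector_derivative (dM0i g (shifts u n t) * y0 + dM1i g (shifts u n t) * y1 + dM2i g (shifts u n t) * y2 + dM3i g (shifts u n t) * y3)) (at t)"
    unfolding MMi_def shifts_def add_0_right power2_eq_square
    apply (rule vd_eq)
     apply (rule has_vector_derivative_mult has_vector_derivative_add has_vector_derivative_diff
        has_vector_derivative_minus has_vector_derivative_const d0 d1 d2 d3)+
    unfolding dM0i_def dM1i_def dM2i_def dM3i_def add_0_right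
    by algebra
  show ?thesis
    apply (rule vd_eq[OF quot_vd[OF dN dM nz]])
    unfolding KK0i_def KK1i_def KK2i_def KK3i_def by (rule quot_lin[OF nz])
qed

lemma alg_i:
  assumes gnz: "g \<noteq> 0" and Mn: "\<forall>j. MMi g (sh j x) \<noteq> 0" and Nn: "\<forall>j. NNi g (sh j x) \<noteq> 0"
  shows "KK0i g x / (MMi g x)^2 * (AAi g x / MMi g (sh (-1) x) - BBi g x / MMi g (sh (-2) x))
      + KK1i g x / (MMi g x)^2 * (AAi g (sh 1 x) / MMi g x - BBi g (sh 1 x) / MMi g (sh (-1) x))
      + KK2i g x / (MMi g x)^2 * (AAi g (sh 2 x) / MMi g (sh 1 x) - BBi g (sh 2 x) / MMi g x)
      + KK3i g x / (MMi g x)^2 * (AAi g (sh 3 x) / MMi g (sh 2 x) - BBi g (sh 3 x) / MMi g (sh 1 x))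
      = W_rhs (\<lambda>j. NNi g (sh j x) / MMi g (sh j x))"
proof -
  have m: "MMi g (sh (-2) x) \<noteq> 0" "MMi g (sh (-1) x) \<noteq> 0" "MMi g x \<noteq> 0" "MMi g (sh 1 x) \<noteq> 0" "MMi g (sh 2 x) \<noteq> 0"
    using Mn[rule_format, of "-2"] Mn[rule_format, of "-1"] Mn[rule_format, of 0] Mn[rule_format, of 1] Mn[rule_format, of 2] by simp_all
  have nn: "NNi g (sh (-2) x) \<noteq> 0" "NNi g (sh (-1) x) \<noteq> 0" "NNi g x \<noteq> 0" "NNi g (sh 1 x) \<noteq> 0" "NNi g (sh 2 x) \<noteq> 0"
    using Nn[rule_format, of "-2"] Nn[rule_format, of "-1"] Nn[rule_format, of 0] Nn[rule_format, of 1] Nn[rule_format, of 2] by simp_all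
  show ?thesis unfolding W_rhs_def sh_0
    by (rule combine[OF m nn i_p1[OF gnz] i_p2[OF gnz] i_p3[OF gnz] i_p4[OF gnz] i_p5[OF gnz] i_p6[OF gnz]])
qed

lemma gfrac_aux: fixes g P Q D :: complex
  assumes "g \<noteq> 0" "D \<noteq> 0"
  shows "g * (g * P) * (g * Q) / (g^2 * D) = g * P * Q / D"
  using assms by (simp add: field_simps power2_eq_square)

lemma G_eq_i:
  assumes gnz: "g \<noteq> 0" and nd: "ndG_i g v"
  shows "MMi g v \<noteq> 0 \<and> G_i g v = NNi g v / MMi g v"
proof -
  let ?D = "(g * v 0 - v 1) * (g * v 2 - v 3) - (g * v 1 - v 2) * (v 0 - g * v 3)"
  have D: "?D \<noteq> 0" using nd unfolding ndG_i_def .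
  have e1: "g * v 0 - (1 + g^2) * v 1 + g * v 2 = g * (v 0 - (inverse g + g) * v 1 + v 2)"
    using gnz by (simp add: field_simps power2_eq_square)
  have e2: "g * v 1 - (1 + g^2) * v 2 + g * v 3 = g * (v 1 - (inverse g + g) * v 2 + v 3)"
    using gnz by (simp add: field_simps power2_eq_square)
  have "MMi g v = g^2 * ?D" unfolding MMi_def ..
  then have M: "MMi g v \<noteq> 0" using gnz D by simp
  have "NNi g v / MMi g v = g * (g * (v 0 - (inverse g + g) * v 1 + v 2)) * (g * (v 1 - (inverse g + g) * v 2 + v 3)) / (g^2 * ?D)"
    unfolding NNi_def MMi_def e1 e2 ..
  also have "\<dots> = G_i g v"
    unfolding G_i_def by (rule gfrac_aux[OF gnz D])
  finally show ?thesis using M by simp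
qed

lemma Fi_aux: fixes g c A B D1 D2 :: complex
  assumes "g \<noteq> 0"
  shows "- c * (A / D1 - B / D2) = g^2 * (- c * A) / (g^2 * D1) - g^2 * (- c * B) / (g^2 * D2)"
  using assms by (simp add: algebra_simps)

lemma F_eq_i:
  assumes gnz: "g \<noteq> 0" and nd: "ndF_i g v" and m1: "MMi g (sh (-1) v) \<noteq> 0" and m2: "MMi g (sh (-2) v) \<noteq> 0"
  shows "F_i g v = AAi g v / MMi g (sh (-1) v) - BBi g v / MMi g (sh (-2) v)"
proof -
  have e1: "MMi g (sh (-1) v) = g^2 * D1_i g v"
    apply (simp add: MMi_def D1_i_def sh_apply)
    apply (algebra)?
    done
  have e2: "MMi g (sh (-2) v) = g^2 * D2_i g v"
    apply (simp add: MMi_def D2_i_def sh_apply)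
    apply (algebra)?
    done
  have d1: "D1_i g v \<noteq> 0" and d2: "D2_i g v \<noteq> 0" using nd unfolding ndF_i_def by auto
  have a: "AAi g v = g^2 * (- (1 + g^2) * ((v 0 - g * v (-1)) * (v 0 - g * v 1) * (v 0 - inverse (g^2) * v 2)))"
    unfolding AAi_def using gnz by (simp add: field_simps power2_eq_square)
  have b: "BBi g v = g^2 * (- (1 + g^2) * ((v 0 - inverse g * v (-1)) * (v 0 - inverse g * v 1) * (v 0 - g^2 * v (-2))))"
    unfolding BBi_def using gnz by (simp add: field_simps power2_eq_square)
  show ?thesis unfolding e1 e2 a b F_i_def by (rule Fi_aux[OF gnz])
qed

lemma maps_i: "g \<noteq> 0 \<Longrightarrow> maps_to_W (F_i g) (ndF_i g) (G_i g) (ndG_i g)"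
  by (rule framework[OF G_eq_i F_eq_i chain_i alg_i])



definition HH :: "complex \<Rightarrow> complex \<Rightarrow> complex \<Rightarrow> complex \<Rightarrow> complex" where
  "HH a b c d = - (c + d + c * d) * b / c - (a + b + a * b) * c / b"

lemma Hf_atom: fixes p a b c d :: complex
  assumes "1 - c \<noteq> 0" "1 - b \<noteq> 0"
  shows "p * ((1 - c * d) * (1 - b)) / (1 - c) + p * ((1 - a * b) * (1 - c)) / (1 - b)
    = p * HH (a - 1) (b - 1) (c - 1) (d - 1)"
proof -
  have "c - 1 \<noteq> 0" "b - 1 \<noteq> 0" using assms by auto
  then show ?thesis using assms unfolding HH_def apply (simp add: field_simps) apply (algebra)? done
qed

lemma Hh_atom: fixes p a b c d :: complex
  assumes "1 + c \<noteq> 0" "1 + b \<noteq> 0"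
  shows "p * ((1 - c * d) * (1 + b)) / (1 + c) + p * ((1 - a * b) * (1 + c)) / (1 + b)
    = p * HH (- a - 1) (- b - 1) (- c - 1) (- d - 1)"
proof -
  have e: "- c - 1 = - (1 + c)" "- b - 1 = - (1 + b)" by simp_all
  have "- c - 1 \<noteq> 0" "- b - 1 \<noteq> 0" using assms unfolding e neg_equal_0_iff_equal by simp_all
  then show ?thesis using assms unfolding HH_def apply (simp add: field_simps) apply (algebra)? done
qed

lemma final_fh: fixes wm2 wm1 w0 w1 w2 :: complex
  assumes "wm1 \<noteq> 0" "w0 \<noteq> 0" "w1 \<noteq> 0"
  shows "(w0 + 1) * (HH wm2 wm1 w0 w1 - HH wm1 w0 w1 w2)
    = (w0 + 1) * (w2 * (1 / w1 + 1) * w0 - w0 * (1 / wm1 + 1) * wm2 + w1 - wm1)"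
  using assms unfolding HH_def apply (simp add: field_simps) apply (algebra)? done

lemma H_f:
  assumes nd: "ndF_f v" and m1: "v (-1) \<noteq> 0" and w1: "1 - v (-1) / v 0 \<noteq> 0"
  shows "F_f v = v 0 * HH (v (-2) / v (-1) - 1) (v (-1) / v 0 - 1) (v 0 / v 1 - 1) (v 1 / v 2 - 1)"
proof -
  have n: "v 0 \<noteq> 0" "v 1 \<noteq> 0" "v 2 \<noteq> 0" "1 - v 0 / v 1 \<noteq> 0" using nd unfolding ndF_f_def by auto
  have r1: "v 0 / v 2 = (v 0 / v 1) * (v 1 / v 2)" using n by simp
  have r2: "v (-2) / v 0 = (v (-2) / v (-1)) * (v (-1) / v 0)" using n m1 by simp
  show ?thesis unfolding F_f_def r1 r2 by (rule Hf_atom[OF n(4) w1])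
qed

lemma H_h:
  assumes nd: "ndF_h v" and m1: "v (-1) \<noteq> 0"
  shows "F_h v = v 0 * HH (- (v (-2) / v (-1)) - 1) (- (v (-1) / v 0) - 1) (- (v 0 / v 1) - 1) (- (v 1 / v 2) - 1)"
proof -
  have n: "v 0 \<noteq> 0" "v 1 \<noteq> 0" "v 2 \<noteq> 0" "1 + v 0 / v 1 \<noteq> 0" "1 + v (-1) / v 0 \<noteq> 0"
    using nd unfolding ndF_h_def by auto
  have r1: "v 0 / v 2 = (v 0 / v 1) * (v 1 / v 2)" using n by simp
  have r2: "v (-2) / v 0 = (v (-2) / v (-1)) * (v (-1) / v 0)" using n m1 by simp
  show ?thesis unfolding F_h_def r1 r2 by (rule Hh_atom[OF n(4) n(5)])
qed

lemma maps_f: "maps_to_W F_f ndF_f G_f ndG_f"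
  unfolding maps_to_W_def
proof (intro allI impI)
  fix u
  assume H: "lattice_solution F_f ndF_f u \<and> (\<forall>n t. ndG_f (shifts u n t)) \<and> (\<forall>n t. transform G_f u n t \<noteq> 0)"
  then have ndF: "\<And>n t. ndF_f (shifts u n t)"
    and der: "\<And>n t. ((\<lambda>s. u n s) has_vector_derivative F_f (shifts u n t)) (at t)"
    and nz: "\<And>n t. transform G_f u n t \<noteq> 0"
    unfolding lattice_solution_def by auto
  show "W_solution (transform G_f u)" unfolding W_solution_def
  proof (intro allI)
    fix n t
    define x where "x = shifts u n t"
    have shx: "\<And>j. shifts u (n + j) t = sh j x" unfolding x_def by (rule shifts_add)
    have xj: "\<And>j. u (n + j) t = x j" unfolding x_def shifts_def by simp
    define w where "w = (\<lambda>j. x j / x (j + 1) - 1)"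
    have ndx: "ndF_f (sh j x)" for j using ndF[of "n+j" t] shx by simp
    have xnz: "x j \<noteq> 0" for j using ndx[of j] unfolding ndF_f_def sh_apply by simp
    have wnz: "w j \<noteq> 0" for j
      using nz[of "n+j" t] shx[of j] unfolding transform_def G_f_def w_def sh_apply by simp
    have F0: "F_f x = x 0 * HH (w (-2)) (w (-1)) (w 0) (w 1)"
    proof -
      have "1 - x (-1) / x 0 \<noteq> 0" using wnz[of "-1"] xnz[of 0] unfolding w_def
        by (simp add: field_simps)
      then show ?thesis using H_f[OF ndx[of 0, simplified] xnz[of "-1"]] unfolding w_def by simp
    qed
    have F1: "F_f (sh 1 x) = x 1 * HH (w (-1)) (w 0) (w 1) (w 2)"
    proof -
      have "1 - x 0 / x 1 \<noteq> 0" using wnz[of 0] xnz[of 1] unfolding w_def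
        by (simp add: field_simps)
      then show ?thesis using H_f[OF ndx[of 1]] xnz[of 0] unfolding w_def by (simp add: sh_apply)
    qed
    have funeq: "(\<lambda>s. transform G_f u n s) = (\<lambda>s. u n s / u (n + 1) s - 1)"
      unfolding transform_def G_f_def shifts_def by simp
    have sw: "shifts (transform G_f u) n t = w"
      unfolding shifts_def transform_def G_f_def w_def using xj by (simp add: add.assoc)
    have d0: "((\<lambda>s. u n s) has_vector_derivative F_f x) (at t)"
      using der[of n t] unfolding x_def .
    have d1: "((\<lambda>s. u (n + 1) s) has_vector_derivative F_f (sh 1 x)) (at t)"
      using der[of "n+1" t] shx by simp
    have u1: "u (n + 1) t \<noteq> 0" using xnz[of 1] xj[of 1] by simp
    have D: "((\<lambda>s. u n s / u (n + 1) s - 1) has_vector_derivative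
        ((F_f x * u (n + 1) t - u n t * F_f (sh 1 x)) / (u (n + 1) t)^2 - 0)) (at t)"
      by (rule has_vector_derivative_diff[OF quot_vd[OF d0 d1 u1] has_vector_derivative_const])
    have un: "u n t = x 0" using xj[of 0] by simp
    have w01: "w 0 + 1 = x 0 / x 1" unfolding w_def by simp
    have "(F_f x * u (n + 1) t - u n t * F_f (sh 1 x)) / (u (n + 1) t)^2 - 0
        = (w 0 + 1) * (HH (w (-2)) (w (-1)) (w 0) (w 1) - HH (w (-1)) (w 0) (w 1) (w 2))"
      unfolding F0 F1 xj[of 1] un w01 using xnz[of 1] apply (simp add: field_simps) apply (algebra)? done
    also have "\<dots> = W_rhs w"
      unfolding W_rhs_def by (rule final_fh[OF wnz wnz wnz])
    finally show "((\<lambda>s. transform G_f u n s) has_vector_derivative W_rhs (shifts (transform G_f u) n t)) (at t)"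
      using D unfolding funeq sw by simp
  qed
qed

lemma maps_h: "maps_to_W F_h ndF_h G_h ndG_h"
  unfolding maps_to_W_def
proof (intro allI impI)
  fix u
  assume H: "lattice_solution F_h ndF_h u \<and> (\<forall>n t. ndG_h (shifts u n t)) \<and> (\<forall>n t. transform G_h u n t \<noteq> 0)"
  then have ndF: "\<And>n t. ndF_h (shifts u n t)"
    and der: "\<And>n t. ((\<lambda>s. u n s) has_vector_derivative F_h (shifts u n t)) (at t)"
    and nz: "\<And>n t. transform G_h u n t \<noteq> 0"
    unfolding lattice_solution_def by auto
  show "W_solution (transform G_h u)" unfolding W_solution_def
  proof (intro allI)
    fix n t
    define x where "x = shifts u n t"
    have shx: "\<And>j. shifts u (n + j) t = sh j x" unfolding x_def by (rule shifts_add)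
    have xj: "\<And>j. u (n + j) t = x j" unfolding x_def shifts_def by simp
    define w where "w = (\<lambda>j. - (x j / x (j + 1)) - 1)"
    have ndx: "ndF_h (sh j x)" for j using ndF[of "n+j" t] shx by simp
    have xnz: "x j \<noteq> 0" for j using ndx[of j] unfolding ndF_h_def sh_apply by simp
    have wnz: "w j \<noteq> 0" for j
      using nz[of "n+j" t] shx[of j] unfolding transform_def G_h_def w_def sh_apply by simp
    have F0: "F_h x = x 0 * HH (w (-2)) (w (-1)) (w 0) (w 1)"
      using H_h[OF ndx[of 0, simplified] xnz[of "-1"]] unfolding w_def by simp
    have F1: "F_h (sh 1 x) = x 1 * HH (w (-1)) (w 0) (w 1) (w 2)"
      using H_h[OF ndx[of 1]] xnz[of 0] unfolding w_def by (simp add: sh_apply)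
    have funeq: "(\<lambda>s. transform G_h u n s) = (\<lambda>s. - (u n s / u (n + 1) s) - 1)"
      unfolding transform_def G_h_def shifts_def by simp
    have sw: "shifts (transform G_h u) n t = w"
      unfolding shifts_def transform_def G_h_def w_def using xj by (simp add: add.assoc)
    have d0: "((\<lambda>s. u n s) has_vector_derivative F_h x) (at t)"
      using der[of n t] unfolding x_def .
    have d1: "((\<lambda>s. u (n + 1) s) has_vector_derivative F_h (sh 1 x)) (at t)"
      using der[of "n+1" t] shx by simp
    have u1: "u (n + 1) t \<noteq> 0" using xnz[of 1] xj[of 1] by simp
    have D: "((\<lambda>s. - (u n s / u (n + 1) s) - 1) has_vector_derivative
        (- ((F_h x * u (n + 1) t - u n t * F_h (sh 1 x)) / (u (n + 1) t)^2) - 0)) (at t)"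
      by (rule has_vector_derivative_diff[OF has_vector_derivative_minus[OF quot_vd[OF d0 d1 u1]] has_vector_derivative_const])
    have un: "u n t = x 0" using xj[of 0] by simp
    have w01: "w 0 + 1 = - (x 0 / x 1)" unfolding w_def by simp
    have "- ((F_h x * u (n + 1) t - u n t * F_h (sh 1 x)) / (u (n + 1) t)^2) - 0
        = (w 0 + 1) * (HH (w (-2)) (w (-1)) (w 0) (w 1) - HH (w (-1)) (w 0) (w 1) (w 2))"
      unfolding F0 F1 xj[of 1] un w01 using xnz[of 1] apply (simp add: field_simps) apply (algebra)? done
    also have "\<dots> = W_rhs w"
      unfolding W_rhs_def by (rule final_fh[OF wnz wnz wnz])
    finally show "((\<lambda>s. transform G_h u n s) has_vector_derivative W_rhs (shifts (transform G_h u) n t)) (at t)"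
      using D unfolding funeq sw by simp
  qed
qed


theorem mainTheorem5:
  shows "maps_to_W F_a ndF_a G_a ndG_a \<and>
         maps_to_W F_c ndF_c G_c ndG_c \<and>
         maps_to_W F_d ndF_d G_d ndG_d \<and>
         maps_to_W F_f ndF_f G_f ndG_f \<and>
         maps_to_W F_h ndF_h G_h ndG_h \<and>
         (\<forall>g::complex. g \<noteq> 0 \<and> g^2 \<noteq> -1 \<longrightarrow> maps_to_W (F_i g) (ndF_i g) (G_i g) (ndG_i g))"
  using maps_a maps_c maps_d maps_f maps_h maps_i by blast

end
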